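(* Consider the following time-allocation model. Task durations $X_1,X_2,\dots$ are i.i.d. copies of a random variable $X$ with values in $[0,C]$, $C>0$, with law unknown to the agent. The reward function $r:[0,C]\to[E,D]$, $E\le 0\le D$, is known to the agent. Idle times $S_1,S_2,\dots$ are i.i.d. exponential with known parameter $\lambda>0$, independent of the durations. At step $n$ the agent waits $S_n$, observes $X_n$, and decides $a_n\in\{0,1\}$; if $a_n=1$ she is busy for time $X_n$ and earns reward $r(X_n)$. Let $\theta=\min\{n:\sum_{i=1}^n(S_i+X_ia_i)>T\}$, let the expected reward of the policy be $U(T)=\mathbb{E}[\sum_{n=1}^\theta r(X_n)a_n]$, and its regret $R(T)=c^*T-U(T)$, where $c^*$ is the unique root on $\mathbb{R}_+$ of $\Phi(c)=\lambda\mathbb{E}[(r(X)-cX)_+]-c$. Consider the policy (Algorithm 1) which, upon receiving the $n$-th proposal $X_n$, computes $c_n$, the unique root on $\mathbb{R}_+$ of $\Phi_n(c)=\lambda\frac1n\sum_{i=1}^n(r(X_i)-cX_i)_+-c$, and accepts the task if and only if $r(X_n)\ge c_nX_n$, until the total elapsed time exceeds $T$. Then its regret satisfies $$R(T)\le \lambda(D-E)C\sqrt{\tfrac{\pi}{2}}\sqrt{\lambda T+1}.$$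
   Context: $(z)_+=\max\{z,0\}$; $\pi$ in the bound denotes the number $3.14159\ldots$. *)

theory Defs
  imports "HOL-Probability.Probability"
begin

definition emp_root :: "real \<Rightarrow> (real \<Rightarrow> real) \<Rightarrow> (nat \<Rightarrow> 'a \<Rightarrow> real) \<Rightarrow> nat \<Rightarrow> 'a \<Rightarrow> real" where
  "emp_root lam r X n \<omega> =
     (THE c. 0 \<le> c \<and> lam * ((1 / real n) * (\<Sum>i=1..n. max (r (X i \<omega>) - c * X i \<omega>) 0)) - c = 0)"

definition alg_action :: "real \<Rightarrow> (real \<Rightarrow> real) \<Rightarrow> (nat \<Rightarrow> 'a \<Rightarrow> real) \<Rightarrow> nat \<Rightarrow> 'a \<Rightarrow> real" where
  "alg_action lam r X n \<omega> = (if r (X n \<omega>) \<ge> emp_root lam r X n \<omega> * X n \<omega> then 1 else 0)"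

definition alg_theta :: "real \<Rightarrow> (real \<Rightarrow> real) \<Rightarrow> (nat \<Rightarrow> 'a \<Rightarrow> real) \<Rightarrow> (nat \<Rightarrow> 'a \<Rightarrow> real) \<Rightarrow> real \<Rightarrow> 'a \<Rightarrow> nat" where
  "alg_theta lam r X S T \<omega> =
     (LEAST n. 1 \<le> n \<and> (\<Sum>i=1..n. S i \<omega> + X i \<omega> * alg_action lam r X i \<omega>) > T)"

definition alg_reward :: "real \<Rightarrow> (real \<Rightarrow> real) \<Rightarrow> (nat \<Rightarrow> 'a \<Rightarrow> real) \<Rightarrow> (nat \<Rightarrow> 'a \<Rightarrow> real) \<Rightarrow> real \<Rightarrow> 'a \<Rightarrow> real" where
  "alg_reward lam r X S T \<omega> =
     (\<Sum>n=1..alg_theta lam r X S T \<omega>. r (X n \<omega>) * alg_action lam r X n \<omega>)"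

definition c_star :: "'a measure \<Rightarrow> real \<Rightarrow> (real \<Rightarrow> real) \<Rightarrow> ('a \<Rightarrow> real) \<Rightarrow> real" where
  "c_star M lam r Y =
     (THE c. 0 \<le> c \<and> lam * (\<integral>\<omega>. max (r (Y \<omega>) - c * Y \<omega>) 0 \<partial>M) - c = 0)"

end

theory Submission
  imports Defs
begin

lemma root_exists_unique:
  fixes A :: "real \<Rightarrow> real" and lam :: real
  assumes lam: "0 \<le> lam" and mono: "\<And>c d. 0 \<le> c \<Longrightarrow> c \<le> d \<Longrightarrow> A d \<le> A c"
    and cont: "continuous_on {0..} A" and A0: "0 \<le> A 0"
  shows "\<exists>!c. 0 \<le> c \<and> lam * A c - c = 0"
proof (rule ex_ex1I)
  define b where "b = lam * A 0"
  have b0: "0 \<le> b" using lam A0 by (simp add: b_def)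
  have c1: "continuous_on {0..b} (\<lambda>x. lam * A x - x)"
    by (intro continuous_intros continuous_on_subset[OF cont]) auto
  have "lam * A b \<le> lam * A 0" using mono[OF order.refl b0] lam by (simp add: mult_left_mono)
  then have fb: "lam * A b - b \<le> 0" by (simp add: b_def)
  have fa: "0 \<le> lam * A 0 - 0" using b0 b_def by simp
  from IVT2'[of "\<lambda>x. lam * A x - x" b 0 0, OF fb fa b0 c1]
  show "\<exists>c. 0 \<le> c \<and> lam * A c - c = 0" by blast
next
  fix c d assume c: "0 \<le> c \<and> lam * A c - c = 0" and d: "0 \<le> d \<and> lam * A d - d = 0"
  show "c = d"
  proof (rule ccontr)
    assume "c \<noteq> d"
    then consider "c < d" | "d < c" by linarith
    then show False
    proof cases
      case 1
      have "lam * A d \<le> lam * A c" using mult_left_mono[OF mono[of c d] lam] c 1 by simp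
      then show False using c d 1 by linarith
    next
      case 2
      have "lam * A c \<le> lam * A d" using mult_left_mono[OF mono[of d c] lam] d 2 by simp
      then show False using c d 2 by linarith
    qed
  qed
qed

lemma root_dist:
  fixes A :: "real \<Rightarrow> real" and lam :: real
  assumes lam: "0 \<le> lam" and mono: "\<And>c d. 0 \<le> c \<Longrightarrow> c \<le> d \<Longrightarrow> A d \<le> A c"
    and c: "0 \<le> c" "lam * A c - c = 0" and d: "0 \<le> d"
  shows "\<bar>c - d\<bar> \<le> \<bar>lam * A d - d\<bar>"
proof (cases "d \<le> c")
  case True
  have "lam * A c \<le> lam * A d" using mult_left_mono[OF mono[OF d True] lam] by simp
  then show ?thesis using c True by linarith
next
  case False
  have "lam * A d \<le> lam * A c" using mult_left_mono[OF mono[of c d] lam] c False by simp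
  then show ?thesis using c False by linarith
qed

lemma root_le_iff:
  fixes A :: "real \<Rightarrow> real" and lam :: real
  assumes lam: "0 \<le> lam" and mono: "\<And>c d. 0 \<le> c \<Longrightarrow> c \<le> d \<Longrightarrow> A d \<le> A c"
    and c: "0 \<le> c" "lam * A c - c = 0"
  shows "c \<le> t \<longleftrightarrow> 0 \<le> t \<and> lam * A t - t \<le> 0"
proof
  assume ct: "c \<le> t"
  have "lam * A t \<le> lam * A c" using mult_left_mono[OF mono[OF c(1) ct] lam] by simp
  then show "0 \<le> t \<and> lam * A t - t \<le> 0" using c ct by linarith
next
  assume t: "0 \<le> t \<and> lam * A t - t \<le> 0"
  show "c \<le> t"
  proof (rule ccontr)
    assume "\<not> c \<le> t"
    then have "lam * A c \<le> lam * A t" using mult_left_mono[OF mono[of t c] lam] t by simp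
    then show False using c t \<open>\<not> c \<le> t\<close> by linarith
  qed
qed

definition empA :: "(real \<Rightarrow> real) \<Rightarrow> (nat \<Rightarrow> 'a \<Rightarrow> real) \<Rightarrow> nat \<Rightarrow> 'a \<Rightarrow> real \<Rightarrow> real" where
  "empA r X n \<omega> c = (1 / real n) * (\<Sum>i=1..n. max (r (X i \<omega>) - c * X i \<omega>) 0)"

lemma empA_mono:
  assumes "\<forall>i\<in>{1..n}. 0 \<le> X i \<omega>" "c \<le> d"
  shows "empA r X n \<omega> d \<le> empA r X n \<omega> c"
  unfolding empA_def
proof (rule mult_left_mono)
  show "(\<Sum>i=1..n. max (r (X i \<omega>) - d * X i \<omega>) 0) \<le> (\<Sum>i=1..n. max (r (X i \<omega>) - c * X i \<omega>) 0)"
  proof (rule sum_mono)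
    fix i assume "i \<in> {1..n}"
    then have "c * X i \<omega> \<le> d * X i \<omega>" using assms by (simp add: mult_right_mono)
    then show "max (r (X i \<omega>) - d * X i \<omega>) 0 \<le> max (r (X i \<omega>) - c * X i \<omega>) 0" by linarith
  qed
qed simp

lemma empA_cont: "continuous_on {0..} (empA r X n \<omega>)"
  unfolding empA_def by (intro continuous_intros)

lemma empA_0: "0 \<le> empA r X n \<omega> 0"
  unfolding empA_def by (intro mult_nonneg_nonneg sum_nonneg) auto

lemma emp_root_eq: "emp_root lam r X n \<omega> = (THE c. 0 \<le> c \<and> lam * empA r X n \<omega> c - c = 0)"
  unfolding emp_root_def empA_def ..

lemma emp_root_spec:
  assumes "0 \<le> lam" "\<forall>i\<in>{1..n}. 0 \<le> X i \<omega>"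
  shows "0 \<le> emp_root lam r X n \<omega> \<and> lam * empA r X n \<omega> (emp_root lam r X n \<omega>) - emp_root lam r X n \<omega> = 0"
proof -
  have m: "\<And>c d. 0 \<le> c \<Longrightarrow> c \<le> d \<Longrightarrow> empA r X n \<omega> d \<le> empA r X n \<omega> c"
    using empA_mono[of n X \<omega>] assms(2) by blast
  show ?thesis unfolding emp_root_eq
    by (rule theI'[OF root_exists_unique[OF assms(1) m empA_cont empA_0]])
qed

lemma emp_root_le_iff:
  assumes "0 \<le> lam" "\<forall>i\<in>{1..n}. 0 \<le> X i \<omega>"
  shows "emp_root lam r X n \<omega> \<le> t \<longleftrightarrow> 0 \<le> t \<and> lam * empA r X n \<omega> t - t \<le> 0"
proof -
  have m: "\<And>c d. 0 \<le> c \<Longrightarrow> c \<le> d \<Longrightarrow> empA r X n \<omega> d \<le> empA r X n \<omega> c"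
    using empA_mono[of n X \<omega>] assms(2) by blast
  show ?thesis using emp_root_spec[of lam n X \<omega> r] assms
    by (intro root_le_iff[OF assms(1) m]) auto
qed

lemma emp_root_dist:
  assumes "0 \<le> lam" "\<forall>i\<in>{1..n}. 0 \<le> X i \<omega>" "0 \<le> d"
  shows "\<bar>emp_root lam r X n \<omega> - d\<bar> \<le> \<bar>lam * empA r X n \<omega> d - d\<bar>"
proof -
  have m: "\<And>c d. 0 \<le> c \<Longrightarrow> c \<le> d \<Longrightarrow> empA r X n \<omega> d \<le> empA r X n \<omega> c"
    using empA_mono[of n X \<omega>] assms(2) by blast
  show ?thesis using emp_root_spec[of lam n X \<omega> r] assms
    by (intro root_dist[OF assms(1) m]) auto
qed

lemma emp_root_cong:
  assumes "\<forall>i\<in>{1..n}. X i \<omega> = X' i \<omega>'"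
  shows "emp_root lam r X n \<omega> = emp_root lam r X' n \<omega>'"
proof -
  have "\<And>c. (\<Sum>i=1..n. max (r (X i \<omega>) - c * X i \<omega>) 0) = (\<Sum>i=1..n. max (r (X' i \<omega>') - c * X' i \<omega>') 0)"
    by (rule sum.cong) (auto simp: assms)
  then show ?thesis unfolding emp_root_def by simp
qed

lemma empA_measurable:
  assumes [measurable]: "r \<in> borel_measurable borel" "\<And>i. i \<in> {1..n} \<Longrightarrow> X i \<in> borel_measurable N"
  shows "(\<lambda>\<omega>. empA r X n \<omega> t) \<in> borel_measurable N"
  unfolding empA_def by (intro borel_measurable_times borel_measurable_const borel_measurable_sum) auto

lemma emp_root_measurable:
  assumes lam: "0 \<le> lam" and [measurable]: "r \<in> borel_measurable borel"
    and X: "\<And>i. i \<in> {1..n} \<Longrightarrow> X i \<in> borel_measurable N"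
    and pos: "\<And>i \<omega>. i \<in> {1..n} \<Longrightarrow> \<omega> \<in> space N \<Longrightarrow> 0 \<le> X i \<omega>"
  shows "emp_root lam r X n \<in> borel_measurable N"
  unfolding borel_measurable_iff_le
proof
  fix t
  have "{w \<in> space N. emp_root lam r X n w \<le> t} = {w \<in> space N. 0 \<le> t \<and> lam * empA r X n w t - t \<le> 0}"
  proof -
    have "\<And>w. w \<in> space N \<Longrightarrow> (emp_root lam r X n w \<le> t) = (0 \<le> t \<and> lam * empA r X n w t - t \<le> 0)"
      by (rule emp_root_le_iff[OF lam]) (use pos in auto)
    then show ?thesis by auto
  qed
  also have "\<dots> \<in> sets N"
  proof -
    have fm[measurable]: "(\<lambda>w. lam * empA r X n w t - t) \<in> borel_measurable N"
      using empA_measurable[of r n X N t, OF _ X] by simp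
    show ?thesis by measurable
  qed
  finally show "{w \<in> space N. emp_root lam r X n w \<le> t} \<in> sets N" .
qed

definition psum :: "real \<Rightarrow> (real \<Rightarrow> real) \<Rightarrow> (nat \<Rightarrow> 'a \<Rightarrow> real) \<Rightarrow> (nat \<Rightarrow> 'a \<Rightarrow> real) \<Rightarrow> nat \<Rightarrow> 'a \<Rightarrow> real" where
  "psum lam r X S n \<omega> = (\<Sum>i=1..n. S i \<omega> + X i \<omega> * alg_action lam r X i \<omega>)"

definition ge_ev :: "real \<Rightarrow> (real \<Rightarrow> real) \<Rightarrow> (nat \<Rightarrow> 'a \<Rightarrow> real) \<Rightarrow> (nat \<Rightarrow> 'a \<Rightarrow> real) \<Rightarrow> real \<Rightarrow> nat \<Rightarrow> 'a \<Rightarrow> bool" where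
  "ge_ev lam r X S T n \<omega> = (\<forall>j\<in>{1..<n}. psum lam r X S j \<omega> \<le> T)"

definition gam :: "(nat \<Rightarrow> 'a \<Rightarrow> real) \<Rightarrow> nat \<Rightarrow> 'a \<Rightarrow> real" where
  "gam S n \<omega> = (\<Sum>i=1..n. S i \<omega>)"

definition q_ev :: "(nat \<Rightarrow> 'a \<Rightarrow> real) \<Rightarrow> real \<Rightarrow> nat \<Rightarrow> 'a \<Rightarrow> bool" where
  "q_ev S T n \<omega> = (\<forall>j\<in>{1..<n}. gam S j \<omega> \<le> T)"

lemma alg_action_cong:
  assumes "\<forall>i\<in>{1..n}. X i \<omega> = X' i \<omega>'" "1 \<le> n"
  shows "alg_action lam r X n \<omega> = alg_action lam r X' n \<omega>'"
proof -
  have "n \<in> {1..n}" using assms by auto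
  moreover have "emp_root lam r X n \<omega> = emp_root lam r X' n \<omega>'" using assms(1) by (rule emp_root_cong)
  ultimately show ?thesis unfolding alg_action_def using assms by auto
qed

lemma psum_cong:
  assumes "\<forall>i\<in>{1..n}. X i \<omega> = X' i \<omega>' \<and> S i \<omega> = S' i \<omega>'"
  shows "psum lam r X S n \<omega> = psum lam r X' S' n \<omega>'"
  unfolding psum_def
proof (rule sum.cong)
  fix i assume i: "i \<in> {1..n}"
  then have "alg_action lam r X i \<omega> = alg_action lam r X' i \<omega>'"
    using assms by (intro alg_action_cong) auto
  then show "S i \<omega> + X i \<omega> * alg_action lam r X i \<omega> = S' i \<omega>' + X' i \<omega>' * alg_action lam r X' i \<omega>'"
    using assms i by auto
qed simp

lemma ge_ev_cong:
  assumes "\<forall>i\<in>{1..<n}. X i \<omega> = X' i \<omega>' \<and> S i \<omega> = S' i \<omega>'"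
  shows "ge_ev lam r X S T n \<omega> = ge_ev lam r X' S' T n \<omega>'"
proof -
  have "\<And>j. j \<in> {1..<n} \<Longrightarrow> psum lam r X S j \<omega> = psum lam r X' S' j \<omega>'"
    using assms by (intro psum_cong) auto
  then show ?thesis unfolding ge_ev_def by auto
qed

lemma q_ev_cong:
  assumes "\<forall>i\<in>{1..<n}. S i \<omega> = S' i \<omega>'"
  shows "q_ev S T n \<omega> = q_ev S' T n \<omega>'"
proof -
  have "\<And>j. j \<in> {1..<n} \<Longrightarrow> gam S j \<omega> = gam S' j \<omega>'"
    using assms unfolding gam_def by (intro sum.cong) auto
  then show ?thesis unfolding q_ev_def by auto
qed

lemma alg_action_measurable:
  assumes lam: "0 \<le> lam" and rm: "r \<in> borel_measurable borel"
    and X: "\<And>i. i \<in> {1..n} \<Longrightarrow> X i \<in> borel_measurable N"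
    and pos: "\<And>i \<omega>. i \<in> {1..n} \<Longrightarrow> \<omega> \<in> space N \<Longrightarrow> 0 \<le> X i \<omega>"
    and n1: "1 \<le> n"
  shows "alg_action lam r X n \<in> borel_measurable N"
proof -
  have False: "n \<noteq> 0" using n1 by simp
  then have Xn[measurable]: "X n \<in> borel_measurable N" using X by auto
  have [measurable]: "emp_root lam r X n \<in> borel_measurable N"
    by (rule emp_root_measurable[OF lam rm X pos])
  have [measurable]: "r \<in> borel_measurable borel" by (rule rm)
  show ?thesis unfolding alg_action_def[abs_def] by measurable
qed

lemma psum_measurable:
  assumes lam: "0 \<le> lam" and rm: "r \<in> borel_measurable borel"
    and X: "\<And>i. i \<in> {1..n} \<Longrightarrow> X i \<in> borel_measurable N"
    and Sm: "\<And>i. i \<in> {1..n} \<Longrightarrow> S i \<in> borel_measurable N"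
    and pos: "\<And>i \<omega>. i \<in> {1..n} \<Longrightarrow> \<omega> \<in> space N \<Longrightarrow> 0 \<le> X i \<omega>"
  shows "psum lam r X S n \<in> borel_measurable N"
  unfolding psum_def[abs_def]
proof (rule borel_measurable_sum)
  fix i assume i: "i \<in> {1..n}"
  have [measurable]: "X i \<in> borel_measurable N" "S i \<in> borel_measurable N" using X Sm i by auto
  have [measurable]: "alg_action lam r X i \<in> borel_measurable N"
    by (rule alg_action_measurable[OF lam rm]) (use X pos i in auto)
  show "(\<lambda>\<omega>. S i \<omega> + X i \<omega> * alg_action lam r X i \<omega>) \<in> borel_measurable N" by measurable
qed

lemma ge_ev_measurable:
  assumes lam: "0 \<le> lam" and rm: "r \<in> borel_measurable borel"
    and X: "\<And>i. i \<in> {1..<n} \<Longrightarrow> X i \<in> borel_measurable N"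
    and Sm: "\<And>i. i \<in> {1..<n} \<Longrightarrow> S i \<in> borel_measurable N"
    and pos: "\<And>i \<omega>. i \<in> {1..<n} \<Longrightarrow> \<omega> \<in> space N \<Longrightarrow> 0 \<le> X i \<omega>"
  shows "Measurable.pred N (ge_ev lam r X S T n)"
proof -
  have [measurable]: "\<And>j. j \<in> {1..<n} \<Longrightarrow> psum lam r X S j \<in> borel_measurable N"
    by (rule psum_measurable[OF lam rm]) (use X Sm pos in auto)
  have "Measurable.pred N (\<lambda>\<omega>. \<forall>j\<in>{1..<n}. psum lam r X S j \<omega> \<le> T)"
    by (intro pred_intros_finite) (auto intro!: borel_measurable_le)
  then show ?thesis unfolding ge_ev_def[abs_def] .
qed

lemma q_ev_measurable:
  assumes Sm: "\<And>i. i \<in> {1..<n} \<Longrightarrow> S i \<in> borel_measurable N"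
  shows "Measurable.pred N (q_ev S T n)"
proof -
  have [measurable]: "\<And>j. j \<in> {1..<n} \<Longrightarrow> gam S j \<in> borel_measurable N"
    unfolding gam_def[abs_def] by (rule borel_measurable_sum) (use Sm in auto)
  have "Measurable.pred N (\<lambda>\<omega>. \<forall>j\<in>{1..<n}. gam S j \<omega> \<le> T)"
    by (intro pred_intros_finite) (auto intro!: borel_measurable_le)
  then show ?thesis unfolding q_ev_def[abs_def] .
qed

definition px :: "nat \<Rightarrow> (nat + nat \<Rightarrow> real) \<Rightarrow> real" where
  "px k v = max 0 (v (Inl k))"
definition ps :: "nat \<Rightarrow> (nat + nat \<Rightarrow> real) \<Rightarrow> real" where
  "ps k v = v (Inr k)"

locale setting = prob_space M for M :: "'a measure" +
  fixes X S :: "nat \<Rightarrow> 'a \<Rightarrow> real" and r :: "real \<Rightarrow> real" and C E D lam T :: real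
  assumes C: "C > 0" and E: "E \<le> 0" and D: "0 \<le> D" and lam: "lam > 0" and T: "T > 0"
    and rm: "r \<in> borel_measurable borel" and rb: "\<forall>x\<in>{0..C}. E \<le> r x \<and> r x \<le> D"
    and Xb: "\<forall>n\<ge>1. \<forall>\<omega>\<in>space M. 0 \<le> X n \<omega> \<and> X n \<omega> \<le> C"
    and ind: "indep_vars (\<lambda>_. borel) (\<lambda>i. case i of Inl n \<Rightarrow> X n | Inr n \<Rightarrow> S n) (Inl ` {1..} \<union> Inr ` {1..})"
    and Xd: "\<forall>n\<ge>1. distr M borel (X n) = distr M borel (X 1)"
    and Sd: "\<forall>n\<ge>1. distributed M lborel (S n) (exponential_density lam)"
begin

abbreviation "II \<equiv> Inl ` {1..} \<union> Inr ` {1..} :: (nat + nat) set"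
abbreviation "ZZ \<equiv> (\<lambda>i. case i of Inl n \<Rightarrow> X n | Inr n \<Rightarrow> S n)"

definition VV :: "(nat + nat) set \<Rightarrow> 'a \<Rightarrow> (nat + nat \<Rightarrow> real)" where
  "VV A \<omega> = restrict (\<lambda>i. ZZ i \<omega>) A"

lemma Xm[measurable]: "1 \<le> n \<Longrightarrow> X n \<in> borel_measurable M"
proof -
  assume n: "1 \<le> n"
  have "Inl n \<in> II" using n by auto
  then have "random_variable borel (ZZ (Inl n))"
    using ind unfolding indep_vars_def by blast
  then show ?thesis by simp
qed

lemma Sm[measurable]: "1 \<le> n \<Longrightarrow> S n \<in> borel_measurable M"
proof -
  assume n: "1 \<le> n"
  have "Inr n \<in> II" using n by auto
  then have "random_variable borel (ZZ (Inr n))"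
    using ind unfolding indep_vars_def by blast
  then show ?thesis by simp
qed

lemma X_nonneg: "1 \<le> n \<Longrightarrow> \<omega> \<in> space M \<Longrightarrow> 0 \<le> X n \<omega>"
  using Xb by auto
lemma X_le: "1 \<le> n \<Longrightarrow> \<omega> \<in> space M \<Longrightarrow> X n \<omega> \<le> C"
  using Xb by auto

lemma VV_measurable[measurable]: "A \<subseteq> II \<Longrightarrow> VV A \<in> measurable M (PiM A (\<lambda>_. borel))"
  unfolding VV_def
proof (rule measurable_restrict)
  fix i assume "A \<subseteq> II" "i \<in> A"
  then have "i \<in> II" by auto
  then show "(\<lambda>\<omega>. ZZ i \<omega>) \<in> borel_measurable M"
    using ind unfolding indep_vars_def by auto
qed

lemma px_VV: "Inl k \<in> A \<Longrightarrow> 1 \<le> k \<Longrightarrow> \<omega> \<in> space M \<Longrightarrow> px k (VV A \<omega>) = X k \<omega>"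
  unfolding px_def VV_def using X_nonneg by auto

lemma ps_VV: "Inr k \<in> A \<Longrightarrow> ps k (VV A \<omega>) = S k \<omega>"
  unfolding ps_def VV_def by auto

lemma px_meas: "Inl k \<in> A \<Longrightarrow> px k \<in> borel_measurable (PiM A (\<lambda>_. borel))"
  unfolding px_def[abs_def] by measurable

lemma ps_meas: "Inr k \<in> A \<Longrightarrow> ps k \<in> borel_measurable (PiM A (\<lambda>_. borel))"
  unfolding ps_def[abs_def] by measurable

lemma px_nonneg: "0 \<le> px k v"
  unfolding px_def by simp

lemma indep_factor:
  fixes f g :: "(nat + nat \<Rightarrow> real) \<Rightarrow> real"
  assumes AB: "A \<subseteq> II" "B \<subseteq> II" "A \<inter> B = {}"
    and f: "f \<in> borel_measurable (PiM A (\<lambda>_. borel))" and g: "g \<in> borel_measurable (PiM B (\<lambda>_. borel))"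
    and fi: "integrable M (\<lambda>\<omega>. f (VV A \<omega>))" and gi: "integrable M (\<lambda>\<omega>. g (VV B \<omega>))"
  shows "(\<integral>\<omega>. f (VV A \<omega>) * g (VV B \<omega>) \<partial>M) = (\<integral>\<omega>. f (VV A \<omega>) \<partial>M) * (\<integral>\<omega>. g (VV B \<omega>) \<partial>M)"
    and "integrable M (\<lambda>\<omega>. f (VV A \<omega>) * g (VV B \<omega>))"
proof -
  have iv: "indep_var (PiM A (\<lambda>_. borel)) (VV A) (PiM B (\<lambda>_. borel)) (VV B)"
    unfolding VV_def[abs_def] using indep_var_restrict[OF ind AB(3,1,2)] .
  have "indep_var borel (f \<circ> VV A) borel (g \<circ> VV B)"
    by (rule indep_var_compose[OF iv f g])
  then have iv2: "indep_var borel (\<lambda>\<omega>. f (VV A \<omega>)) borel (\<lambda>\<omega>. g (VV B \<omega>))"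
    by (simp add: comp_def)
  show "(\<integral>\<omega>. f (VV A \<omega>) * g (VV B \<omega>) \<partial>M) = (\<integral>\<omega>. f (VV A \<omega>) \<partial>M) * (\<integral>\<omega>. g (VV B \<omega>) \<partial>M)"
    by (rule indep_var_lebesgue_integral[OF iv2 fi gi])
  show "integrable M (\<lambda>\<omega>. f (VV A \<omega>) * g (VV B \<omega>))"
    by (rule indep_var_integrable[OF iv2 fi gi])
qed

lemma bounded_integrable:
  fixes f :: "'a \<Rightarrow> real"
  assumes "f \<in> borel_measurable M" "\<And>\<omega>. \<omega> \<in> space M \<Longrightarrow> \<bar>f \<omega>\<bar> \<le> B"
  shows "integrable M f"
  using assms by (intro integrable_const_bound[where B=B]) auto

end

context setting begin

lemma r_bounds: "1 \<le> n \<Longrightarrow> \<omega> \<in> space M \<Longrightarrow> E \<le> r (X n \<omega>) \<and> r (X n \<omega>) \<le> D"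
  using rb X_nonneg X_le by auto

definition AA :: "real \<Rightarrow> real" where
  "AA c = (\<integral>\<omega>. max (r (X 1 \<omega>) - c * X 1 \<omega>) 0 \<partial>M)"

lemma AA_integrable: "integrable M (\<lambda>\<omega>. max (r (X 1 \<omega>) - c * X 1 \<omega>) 0)"
proof (rule bounded_integrable)
  have [measurable]: "r \<in> borel_measurable borel" by (rule rm)
  show "(\<lambda>\<omega>. max (r (X 1 \<omega>) - c * X 1 \<omega>) 0) \<in> borel_measurable M" by measurable
  fix \<omega> assume w: "\<omega> \<in> space M"
  have "\<bar>r (X 1 \<omega>)\<bar> \<le> D - E" using r_bounds[of 1 \<omega>] w D E by auto
  moreover have "\<bar>c * X 1 \<omega>\<bar> \<le> \<bar>c\<bar> * C"
    using X_nonneg[of 1 \<omega>] X_le[of 1 \<omega>] w by (auto simp: abs_mult intro: mult_left_mono)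
  ultimately show "\<bar>max (r (X 1 \<omega>) - c * X 1 \<omega>) 0\<bar> \<le> D - E + \<bar>c\<bar> * C" by linarith
qed

lemma AA_mono: "c \<le> d \<Longrightarrow> AA d \<le> AA c"
  unfolding AA_def
proof (rule integral_mono[OF AA_integrable AA_integrable])
  fix \<omega> assume "c \<le> d" "\<omega> \<in> space M"
  then have "c * X 1 \<omega> \<le> d * X 1 \<omega>" using X_nonneg[of 1 \<omega>] by (simp add: mult_right_mono)
  then show "max (r (X 1 \<omega>) - d * X 1 \<omega>) 0 \<le> max (r (X 1 \<omega>) - c * X 1 \<omega>) 0" by linarith
qed

lemma AA_lip: "\<bar>AA c - AA d\<bar> \<le> C * \<bar>c - d\<bar>"
proof -
  have "\<bar>AA c - AA d\<bar> = \<bar>\<integral>\<omega>. max (r (X 1 \<omega>) - c * X 1 \<omega>) 0 - max (r (X 1 \<omega>) - d * X 1 \<omega>) 0 \<partial>M\<bar>"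
    unfolding AA_def by (subst Bochner_Integration.integral_diff[OF AA_integrable AA_integrable]) simp
  also have "\<dots> \<le> (\<integral>\<omega>. \<bar>max (r (X 1 \<omega>) - c * X 1 \<omega>) 0 - max (r (X 1 \<omega>) - d * X 1 \<omega>) 0\<bar> \<partial>M)"
    by (rule integral_abs_bound)
  also have "\<dots> \<le> (\<integral>\<omega>. C * \<bar>c - d\<bar> \<partial>M)"
  proof (rule integral_mono)
    show "integrable M (\<lambda>\<omega>. \<bar>max (r (X 1 \<omega>) - c * X 1 \<omega>) 0 - max (r (X 1 \<omega>) - d * X 1 \<omega>) 0\<bar>)"
      by (intro integrable_abs Bochner_Integration.integrable_diff AA_integrable)
    fix \<omega> assume w: "\<omega> \<in> space M"
    have "\<bar>c * X 1 \<omega> - d * X 1 \<omega>\<bar> = \<bar>c - d\<bar> * X 1 \<omega>"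
      using X_nonneg[of 1 \<omega>] w by (simp add: abs_mult left_diff_distrib[symmetric])
    also have "\<dots> \<le> \<bar>c - d\<bar> * C" using X_le[of 1 \<omega>] w by (simp add: mult_left_mono)
    finally show "\<bar>max (r (X 1 \<omega>) - c * X 1 \<omega>) 0 - max (r (X 1 \<omega>) - d * X 1 \<omega>) 0\<bar> \<le> C * \<bar>c - d\<bar>"
      by (simp add: mult.commute)
  qed simp
  also have "\<dots> = C * \<bar>c - d\<bar>" by (simp add: prob_space)
  finally show ?thesis .
qed

lemma AA_cont: "continuous_on {0..} AA"
proof (rule lipschitz_on_continuous_on)
  show "C-lipschitz_on {0..} AA"
  proof (rule lipschitz_onI)
    fix x y :: real
    show "dist (AA x) (AA y) \<le> C * dist x y" using AA_lip[of x y] by (simp add: dist_real_def)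
  qed (use C in simp)
qed

lemma AA_0: "0 \<le> AA 0"
  unfolding AA_def by (rule integral_nonneg_AE) auto

definition cstar :: real where "cstar = c_star M lam r (X 1)"

lemma cstar_spec: "0 \<le> cstar \<and> lam * AA cstar - cstar = 0"
proof -
  have "c_star M lam r (X 1) = (THE c. 0 \<le> c \<and> lam * AA c - c = 0)"
    unfolding c_star_def AA_def ..
  moreover have ex1: "\<exists>!c. 0 \<le> c \<and> lam * AA c - c = 0"
  proof (rule root_exists_unique)
    show "0 \<le> lam" using lam by simp
    show "\<And>c d. 0 \<le> c \<Longrightarrow> c \<le> d \<Longrightarrow> AA d \<le> AA c" using AA_mono by blast
  qed (rule AA_cont, rule AA_0)
  ultimately show ?thesis unfolding cstar_def using theI'[OF ex1] by simp
qed

definition mu :: real where "mu = AA cstar"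

lemma cstar_eq: "cstar = lam * mu" and cstar_nonneg: "0 \<le> cstar"
  using cstar_spec unfolding mu_def by auto

definition YY :: "nat \<Rightarrow> 'a \<Rightarrow> real" where
  "YY n \<omega> = max (r (X n \<omega>) - cstar * X n \<omega>) 0"

lemma YY_meas[measurable]: "1 \<le> n \<Longrightarrow> YY n \<in> borel_measurable M"
proof -
  assume n: "1 \<le> n"
  have [measurable]: "X n \<in> borel_measurable M" using Xm[OF n] .
  have [measurable]: "r \<in> borel_measurable borel" by (rule rm)
  show ?thesis unfolding YY_def[abs_def] by measurable
qed

lemma YY_bounds: "1 \<le> n \<Longrightarrow> \<omega> \<in> space M \<Longrightarrow> 0 \<le> YY n \<omega> \<and> YY n \<omega> \<le> D"
proof -
  assume n: "1 \<le> n" and w: "\<omega> \<in> space M"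
  have "0 \<le> cstar * X n \<omega>" using cstar_nonneg X_nonneg[OF n w] by simp
  then show ?thesis using r_bounds[OF n w] D unfolding YY_def by auto
qed

lemma YY_integrable: "1 \<le> n \<Longrightarrow> integrable M (YY n)"
  by (rule bounded_integrable[where B=D]) (use YY_bounds in auto)

lemma same_distr_integral:
  fixes h :: "real \<Rightarrow> real"
  assumes n: "1 \<le> n" and h[measurable]: "h \<in> borel_measurable borel"
  shows "(\<integral>\<omega>. h (X n \<omega>) \<partial>M) = (\<integral>\<omega>. h (X 1 \<omega>) \<partial>M)"
proof -
  have "(\<integral>\<omega>. h (X n \<omega>) \<partial>M) = integral\<^sup>L (distr M borel (X n)) h"
    by (rule integral_distr[symmetric, OF Xm[OF n] h])
  also have "\<dots> = integral\<^sup>L (distr M borel (X 1)) h"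
  proof -
    have "distr M borel (X n) = distr M borel (X 1)" using Xd n by blast
    then show ?thesis by (rule arg_cong)
  qed
  also have "\<dots> = (\<integral>\<omega>. h (X 1 \<omega>) \<partial>M)" by (rule integral_distr[OF Xm h]) simp
  finally show ?thesis .
qed

lemma YY_mean: "1 \<le> n \<Longrightarrow> (\<integral>\<omega>. YY n \<omega> \<partial>M) = mu"
proof -
  assume n: "1 \<le> n"
  have [measurable]: "r \<in> borel_measurable borel" by (rule rm)
  have "(\<integral>\<omega>. YY n \<omega> \<partial>M) = (\<integral>\<omega>. (\<lambda>x. max (r x - cstar * x) 0) (X n \<omega>) \<partial>M)"
    unfolding YY_def ..
  also have "\<dots> = (\<integral>\<omega>. (\<lambda>x. max (r x - cstar * x) 0) (X 1 \<omega>) \<partial>M)"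
    by (rule same_distr_integral[OF n]) measurable
  also have "\<dots> = mu" unfolding mu_def AA_def by simp
  finally show ?thesis .
qed

definition Ybar :: "nat \<Rightarrow> 'a \<Rightarrow> real" where
  "Ybar n \<omega> = (1 / real n) * (\<Sum>i=1..n. YY i \<omega>)"

lemma Ybar_meas[measurable]: "Ybar n \<in> borel_measurable M"
  unfolding Ybar_def[abs_def] by (intro borel_measurable_times borel_measurable_const borel_measurable_sum) auto

lemma croot_dist:
  assumes n: "1 \<le> n" and w: "\<omega> \<in> space M"
  shows "\<bar>emp_root lam r X n \<omega> - cstar\<bar> \<le> lam * \<bar>Ybar n \<omega> - mu\<bar>"
proof -
  have "\<bar>emp_root lam r X n \<omega> - cstar\<bar> \<le> \<bar>lam * empA r X n \<omega> cstar - cstar\<bar>"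
    by (rule emp_root_dist) (use lam X_nonneg w cstar_nonneg in auto)
  also have "empA r X n \<omega> cstar = Ybar n \<omega>" unfolding empA_def Ybar_def YY_def ..
  also have "\<bar>lam * Ybar n \<omega> - cstar\<bar> = lam * \<bar>Ybar n \<omega> - mu\<bar>"
    using lam by (simp add: cstar_eq abs_mult right_diff_distrib[symmetric])
  finally show ?thesis .
qed

definition ell :: "nat \<Rightarrow> 'a \<Rightarrow> real" where
  "ell n \<omega> = YY n \<omega> - (r (X n \<omega>) - cstar * X n \<omega>) * alg_action lam r X n \<omega>"

lemma ell_bounds:
  assumes n: "1 \<le> n" and w: "\<omega> \<in> space M"
  shows "0 \<le> ell n \<omega> \<and> ell n \<omega> \<le> C * \<bar>emp_root lam r X n \<omega> - cstar\<bar>"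
proof -
  let ?c = "emp_root lam r X n \<omega>"
  have x0: "0 \<le> X n \<omega>" and xC: "X n \<omega> \<le> C" using X_nonneg[OF n w] X_le[OF n w] by auto
  have k: "\<bar>(?c - cstar) * X n \<omega>\<bar> \<le> C * \<bar>?c - cstar\<bar>"
    using x0 xC mult_left_mono[OF xC abs_ge_zero[of "?c - cstar"]] by (simp add: abs_mult mult.commute)
  show ?thesis
  proof (cases "r (X n \<omega>) \<ge> ?c * X n \<omega>")
    case True
    then have "ell n \<omega> = max (r (X n \<omega>) - cstar * X n \<omega>) 0 - (r (X n \<omega>) - cstar * X n \<omega>)"
      unfolding ell_def YY_def alg_action_def by simp
    moreover have "cstar * X n \<omega> - r (X n \<omega>) \<le> (cstar - ?c) * X n \<omega>" using True by (simp add: left_diff_distrib)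
    ultimately show ?thesis using k by (auto simp: abs_minus_commute left_diff_distrib)
  next
    case False
    then have "ell n \<omega> = max (r (X n \<omega>) - cstar * X n \<omega>) 0"
      unfolding ell_def YY_def alg_action_def by simp
    moreover have "r (X n \<omega>) - cstar * X n \<omega> \<le> (?c - cstar) * X n \<omega>" using False by (simp add: left_diff_distrib)
    ultimately show ?thesis using k by auto
  qed
qed

lemma ell_bound2:
  assumes n: "1 \<le> n" and w: "\<omega> \<in> space M"
  shows "ell n \<omega> \<le> lam * C * \<bar>Ybar n \<omega> - mu\<bar>"
proof -
  have "ell n \<omega> \<le> C * \<bar>emp_root lam r X n \<omega> - cstar\<bar>" using ell_bounds[OF n w] by auto
  also have "\<dots> \<le> C * (lam * \<bar>Ybar n \<omega> - mu\<bar>)" using croot_dist[OF n w] C by (simp add: mult_left_mono)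
  finally show ?thesis by (simp add: mult_ac)
qed

end

context setting begin

lemma S_dist: "1 \<le> n \<Longrightarrow> distributed M lborel (S n) (exponential_density lam)"
  using Sd by blast

lemma S_integrable: "1 \<le> n \<Longrightarrow> integrable M (S n)"
  using erlang_ith_moment_integrable[OF lam S_dist, of n 1] by simp

lemma S_mean: "1 \<le> n \<Longrightarrow> (\<integral>\<omega>. S n \<omega> \<partial>M) = 1 / lam"
  using exponential_distributed_expectation[OF lam S_dist] by simp

lemma S_AE_nonneg: "1 \<le> n \<Longrightarrow> AE \<omega> in M. 0 \<le> S n \<omega>"
proof -
  assume n: "1 \<le> n"
  have "(AE \<omega> in M. 0 \<le> S n \<omega>) \<longleftrightarrow> (AE x in lborel. 0 < exponential_density lam x \<longrightarrow> 0 \<le> x)"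
    using distributed_AE2[OF S_dist[OF n], of "\<lambda>x. 0 \<le> x"] by simp
  also have "\<dots>" by (rule AE_I2) (auto simp: exponential_density_def split: if_splits)
  finally show ?thesis .
qed

lemma ge_meas_Pi:
  assumes "Inl ` {1..<n} \<subseteq> A" "Inr ` {1..<n} \<subseteq> A"
  shows "Measurable.pred (PiM A (\<lambda>_. borel)) (ge_ev lam r px ps T n)"
proof (rule ge_ev_measurable)
  show "0 \<le> lam" using lam by simp
  show "r \<in> borel_measurable borel" by (rule rm)
  fix i assume i: "i \<in> {1..<n}"
  show "px i \<in> borel_measurable (PiM A (\<lambda>_. borel))" using assms i by (intro px_meas) auto
  show "ps i \<in> borel_measurable (PiM A (\<lambda>_. borel))" using assms i by (intro ps_meas) auto
  fix v show "0 \<le> px i v" by (rule px_nonneg)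
qed

lemma ge_eq:
  assumes "Inl ` {1..<n} \<subseteq> A" "Inr ` {1..<n} \<subseteq> A" "\<omega> \<in> space M"
  shows "ge_ev lam r px ps T n (VV A \<omega>) = ge_ev lam r X S T n \<omega>"
  by (rule ge_ev_cong) (use assms in \<open>auto simp: px_VV ps_VV\<close>)

lemma q_meas_Pi:
  assumes "Inr ` {1..<n} \<subseteq> A"
  shows "Measurable.pred (PiM A (\<lambda>_. borel)) (q_ev ps T n)"
proof (rule q_ev_measurable)
  fix i assume "i \<in> {1..<n}"
  then have "Inr i \<in> A" using assms by auto
  then show "ps i \<in> borel_measurable (PiM A (\<lambda>_. borel))" by (rule ps_meas)
qed

lemma q_eq:
  assumes "Inr ` {1..<n} \<subseteq> A"
  shows "q_ev ps T n (VV A \<omega>) = q_ev S T n \<omega>"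
  by (rule q_ev_cong) (use assms in \<open>auto simp: ps_VV\<close>)

definition YP :: "nat \<Rightarrow> (nat + nat \<Rightarrow> real) \<Rightarrow> real" where
  "YP i v = max (r (px i v) - cstar * px i v) 0"

lemma YP_meas: "Inl i \<in> A \<Longrightarrow> YP i \<in> borel_measurable (PiM A (\<lambda>_. borel))"
proof -
  assume "Inl i \<in> A"
  then have [measurable]: "px i \<in> borel_measurable (PiM A (\<lambda>_. borel))" by (rule px_meas)
  have [measurable]: "r \<in> borel_measurable borel" by (rule rm)
  show ?thesis unfolding YP_def[abs_def] by measurable
qed

lemma YP_eq: "Inl i \<in> A \<Longrightarrow> 1 \<le> i \<Longrightarrow> \<omega> \<in> space M \<Longrightarrow> YP i (VV A \<omega>) = YY i \<omega>"
  unfolding YP_def YY_def by (simp add: px_VV)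

definition YbarP :: "nat \<Rightarrow> (nat + nat \<Rightarrow> real) \<Rightarrow> real" where
  "YbarP n v = (1 / real n) * (\<Sum>i=1..n. YP i v)"

lemma YbarP_meas: "Inl ` {1..n} \<subseteq> A \<Longrightarrow> YbarP n \<in> borel_measurable (PiM A (\<lambda>_. borel))"
  unfolding YbarP_def[abs_def]
  by (intro borel_measurable_times borel_measurable_const borel_measurable_sum YP_meas) auto

lemma YbarP_eq: "Inl ` {1..n} \<subseteq> A \<Longrightarrow> \<omega> \<in> space M \<Longrightarrow> YbarP n (VV A \<omega>) = Ybar n \<omega>"
proof -
  assume A: "Inl ` {1..n} \<subseteq> A" and w: "\<omega> \<in> space M"
  have "\<And>i. i \<in> {1..n} \<Longrightarrow> YP i (VV A \<omega>) = YY i \<omega>"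
  proof -
    fix i assume i: "i \<in> {1..n}"
    then have "Inl i \<in> A" using A by auto
    then show "YP i (VV A \<omega>) = YY i \<omega>" using YP_eq i w by auto
  qed
  then show ?thesis unfolding YbarP_def Ybar_def by simp
qed

lemma ge_pred[measurable]: "1 \<le> n \<Longrightarrow> Measurable.pred M (ge_ev lam r X S T n)"
  by (rule ge_ev_measurable) (use lam rm X_nonneg in auto)

lemma q_pred[measurable]: "Measurable.pred M (q_ev S T n)"
  by (rule q_ev_measurable) auto

lemma ind_integrable: "Measurable.pred M P \<Longrightarrow> integrable M (\<lambda>\<omega>. of_bool (P \<omega>) :: real)"
  by (rule bounded_integrable[where B=1]) auto

lemma F1:
  assumes n: "1 \<le> n"
  shows "(\<integral>\<omega>. of_bool (ge_ev lam r X S T n \<omega>) * S n \<omega> \<partial>M) = (\<integral>\<omega>. of_bool (ge_ev lam r X S T n \<omega>) \<partial>M) / lam"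
    and "integrable M (\<lambda>\<omega>. of_bool (ge_ev lam r X S T n \<omega>) * S n \<omega>)"
proof -
  define A where "A = Inl ` {1..<n} \<union> Inr ` {1..<n}"
  define B where "B = {Inr n :: nat + nat}"
  define f where "f v = (of_bool (ge_ev lam r px ps T n v) :: real)" for v
  have AB: "A \<subseteq> II" "B \<subseteq> II" "A \<inter> B = {}" using n unfolding A_def B_def by auto
  have fm: "f \<in> borel_measurable (PiM A (\<lambda>_. borel))"
  proof -
    have [measurable]: "Measurable.pred (PiM A (\<lambda>_. borel)) (ge_ev lam r px ps T n)"
      by (rule ge_meas_Pi) (auto simp: A_def)
    show ?thesis unfolding f_def[abs_def] by measurable
  qed
  have gm: "ps n \<in> borel_measurable (PiM B (\<lambda>_. borel))" by (rule ps_meas) (simp add: B_def)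
  have feq: "\<And>\<omega>. \<omega> \<in> space M \<Longrightarrow> f (VV A \<omega>) = of_bool (ge_ev lam r X S T n \<omega>)"
    unfolding f_def by (subst ge_eq) (auto simp: A_def)
  have geq: "\<And>\<omega>. ps n (VV B \<omega>) = S n \<omega>" by (rule ps_VV) (simp add: B_def)
  have fi: "integrable M (\<lambda>\<omega>. f (VV A \<omega>))"
  proof -
    have "integrable M (\<lambda>\<omega>. f (VV A \<omega>)) \<longleftrightarrow> integrable M (\<lambda>\<omega>. of_bool (ge_ev lam r X S T n \<omega>) :: real)"
      by (rule Bochner_Integration.integrable_cong) (auto simp: feq)
    then show ?thesis using ind_integrable[OF ge_pred[OF n]] by simp
  qed
  have gi: "integrable M (\<lambda>\<omega>. ps n (VV B \<omega>))" using S_integrable[OF n] by (simp add: geq)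
  note IF = indep_factor[OF AB fm gm fi gi]
  have "(\<integral>\<omega>. of_bool (ge_ev lam r X S T n \<omega>) * S n \<omega> \<partial>M) = (\<integral>\<omega>. f (VV A \<omega>) * ps n (VV B \<omega>) \<partial>M)"
    by (rule Bochner_Integration.integral_cong) (auto simp: feq geq)
  also have "\<dots> = (\<integral>\<omega>. f (VV A \<omega>) \<partial>M) * (\<integral>\<omega>. ps n (VV B \<omega>) \<partial>M)" by (rule IF(1))
  also have "(\<integral>\<omega>. f (VV A \<omega>) \<partial>M) = (\<integral>\<omega>. of_bool (ge_ev lam r X S T n \<omega>) \<partial>M)"
    by (rule Bochner_Integration.integral_cong) (auto simp: feq)
  also have "(\<integral>\<omega>. ps n (VV B \<omega>) \<partial>M) = 1 / lam" by (simp add: geq S_mean[OF n])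
  finally show "(\<integral>\<omega>. of_bool (ge_ev lam r X S T n \<omega>) * S n \<omega> \<partial>M) = (\<integral>\<omega>. of_bool (ge_ev lam r X S T n \<omega>) \<partial>M) / lam"
    by simp
  show "integrable M (\<lambda>\<omega>. of_bool (ge_ev lam r X S T n \<omega>) * S n \<omega>)"
  proof -
    have "integrable M (\<lambda>\<omega>. f (VV A \<omega>) * ps n (VV B \<omega>)) \<longleftrightarrow> integrable M (\<lambda>\<omega>. of_bool (ge_ev lam r X S T n \<omega>) * S n \<omega>)"
      by (rule Bochner_Integration.integrable_cong) (auto simp: feq geq)
    then show ?thesis using IF(2) by simp
  qed
qed

end

context setting begin

lemma indep_factor2:
  fixes f g :: "(nat + nat \<Rightarrow> real) \<Rightarrow> real" and F G :: "'a \<Rightarrow> real"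
  assumes AB: "A \<subseteq> II" "B \<subseteq> II" "A \<inter> B = {}"
    and fm: "f \<in> borel_measurable (PiM A (\<lambda>_. borel))" and gm: "g \<in> borel_measurable (PiM B (\<lambda>_. borel))"
    and feq: "\<And>\<omega>. \<omega> \<in> space M \<Longrightarrow> f (VV A \<omega>) = F \<omega>"
    and geq: "\<And>\<omega>. \<omega> \<in> space M \<Longrightarrow> g (VV B \<omega>) = G \<omega>"
    and Fi: "integrable M F" and Gi: "integrable M G"
  shows "(\<integral>\<omega>. F \<omega> * G \<omega> \<partial>M) = (\<integral>\<omega>. F \<omega> \<partial>M) * (\<integral>\<omega>. G \<omega> \<partial>M)"
    and "integrable M (\<lambda>\<omega>. F \<omega> * G \<omega>)"
proof -
  have fi: "integrable M (\<lambda>\<omega>. f (VV A \<omega>))"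
  proof -
    have "integrable M (\<lambda>\<omega>. f (VV A \<omega>)) \<longleftrightarrow> integrable M F"
      by (rule Bochner_Integration.integrable_cong) (auto simp: feq)
    then show ?thesis using Fi by simp
  qed
  have gi: "integrable M (\<lambda>\<omega>. g (VV B \<omega>))"
  proof -
    have "integrable M (\<lambda>\<omega>. g (VV B \<omega>)) \<longleftrightarrow> integrable M G"
      by (rule Bochner_Integration.integrable_cong) (auto simp: geq)
    then show ?thesis using Gi by simp
  qed
  note IF = indep_factor[OF AB fm gm fi gi]
  have "(\<integral>\<omega>. F \<omega> * G \<omega> \<partial>M) = (\<integral>\<omega>. f (VV A \<omega>) * g (VV B \<omega>) \<partial>M)"
    by (rule Bochner_Integration.integral_cong) (auto simp: feq geq)
  also have "\<dots> = (\<integral>\<omega>. f (VV A \<omega>) \<partial>M) * (\<integral>\<omega>. g (VV B \<omega>) \<partial>M)" by (rule IF(1))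
  also have "(\<integral>\<omega>. f (VV A \<omega>) \<partial>M) = (\<integral>\<omega>. F \<omega> \<partial>M)"
    by (rule Bochner_Integration.integral_cong) (auto simp: feq)
  also have "(\<integral>\<omega>. g (VV B \<omega>) \<partial>M) = (\<integral>\<omega>. G \<omega> \<partial>M)"
    by (rule Bochner_Integration.integral_cong) (auto simp: geq)
  finally show "(\<integral>\<omega>. F \<omega> * G \<omega> \<partial>M) = (\<integral>\<omega>. F \<omega> \<partial>M) * (\<integral>\<omega>. G \<omega> \<partial>M)" .
  have "integrable M (\<lambda>\<omega>. f (VV A \<omega>) * g (VV B \<omega>)) \<longleftrightarrow> integrable M (\<lambda>\<omega>. F \<omega> * G \<omega>)"
    by (rule Bochner_Integration.integrable_cong) (auto simp: feq geq)
  then show "integrable M (\<lambda>\<omega>. F \<omega> * G \<omega>)" using IF(2) by simp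
qed

lemma ge_fm:
  assumes "Inl ` {1..<n} \<subseteq> A" "Inr ` {1..<n} \<subseteq> A"
  shows "(\<lambda>v. of_bool (ge_ev lam r px ps T n v) :: real) \<in> borel_measurable (PiM A (\<lambda>_. borel))"
proof -
  have [measurable]: "Measurable.pred (PiM A (\<lambda>_. borel)) (ge_ev lam r px ps T n)"
    by (rule ge_meas_Pi[OF assms])
  show ?thesis by measurable
qed

lemma F2:
  assumes n: "1 \<le> n"
  shows "(\<integral>\<omega>. of_bool (ge_ev lam r X S T n \<omega>) * YY n \<omega> \<partial>M) = (\<integral>\<omega>. of_bool (ge_ev lam r X S T n \<omega>) \<partial>M) * mu"
    and "integrable M (\<lambda>\<omega>. of_bool (ge_ev lam r X S T n \<omega>) * YY n \<omega>)"
proof -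
  define A where "A = Inl ` {1..<n} \<union> Inr ` {1..<n}"
  define B where "B = {Inl n :: nat + nat}"
  have AB: "A \<subseteq> II" "B \<subseteq> II" "A \<inter> B = {}" using n unfolding A_def B_def by auto
  have fm: "(\<lambda>v. of_bool (ge_ev lam r px ps T n v) :: real) \<in> borel_measurable (PiM A (\<lambda>_. borel))"
    by (rule ge_fm) (auto simp: A_def)
  have gm: "YP n \<in> borel_measurable (PiM B (\<lambda>_. borel))" by (rule YP_meas) (simp add: B_def)
  have feq: "\<And>\<omega>. \<omega> \<in> space M \<Longrightarrow> (of_bool (ge_ev lam r px ps T n (VV A \<omega>)) :: real) = of_bool (ge_ev lam r X S T n \<omega>)"
    by (subst ge_eq) (auto simp: A_def)
  have geq: "\<And>\<omega>. \<omega> \<in> space M \<Longrightarrow> YP n (VV B \<omega>) = YY n \<omega>" by (rule YP_eq) (use n in \<open>auto simp: B_def\<close>)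
  note IF = indep_factor2[OF AB fm gm feq geq ind_integrable[OF ge_pred[OF n]] YY_integrable[OF n]]
  show "(\<integral>\<omega>. of_bool (ge_ev lam r X S T n \<omega>) * YY n \<omega> \<partial>M) = (\<integral>\<omega>. of_bool (ge_ev lam r X S T n \<omega>) \<partial>M) * mu"
    using IF(1) YY_mean[OF n] by simp
  show "integrable M (\<lambda>\<omega>. of_bool (ge_ev lam r X S T n \<omega>) * YY n \<omega>)" by (rule IF(2))
qed

lemma Ybar_bounds: "\<omega> \<in> space M \<Longrightarrow> 0 \<le> Ybar n \<omega> \<and> Ybar n \<omega> \<le> D"
proof -
  assume w: "\<omega> \<in> space M"
  have s0: "0 \<le> (\<Sum>i=1..n. YY i \<omega>)" by (rule sum_nonneg) (use YY_bounds w in auto)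
  have s1: "(\<Sum>i=1..n. YY i \<omega>) \<le> real n * D"
    using sum_mono[of "{1..n}" "\<lambda>i. YY i \<omega>" "\<lambda>i. D"] YY_bounds w by auto
  show ?thesis
  proof (cases "n = 0")
    case True then show ?thesis using D by (simp add: Ybar_def)
  next
    case False
    then show ?thesis using s0 s1 unfolding Ybar_def by (auto simp: field_simps)
  qed
qed

lemma mu_bounds: "0 \<le> mu \<and> mu \<le> D"
proof -
  have "mu = (\<integral>\<omega>. YY 1 \<omega> \<partial>M)" using YY_mean[of 1] by simp
  moreover have "0 \<le> (\<integral>\<omega>. YY 1 \<omega> \<partial>M)" by (rule integral_nonneg_AE) (use YY_bounds[of 1] in auto)
  moreover have "(\<integral>\<omega>. YY 1 \<omega> \<partial>M) \<le> (\<integral>\<omega>. D \<partial>M)"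
    by (rule integral_mono[OF YY_integrable]) (use YY_bounds[of 1] in auto)
  ultimately show ?thesis by (simp add: prob_space)
qed

lemma Ydev_integrable: "integrable M (\<lambda>\<omega>. \<bar>Ybar n \<omega> - mu\<bar>)"
proof (rule bounded_integrable[where B=D])
  show "(\<lambda>\<omega>. \<bar>Ybar n \<omega> - mu\<bar>) \<in> borel_measurable M" by measurable
  fix \<omega> assume w: "\<omega> \<in> space M"
  show "\<bar>\<bar>Ybar n \<omega> - mu\<bar>\<bar> \<le> D" using Ybar_bounds[OF w, of n] mu_bounds by (simp add: abs_le_iff)
qed

lemma F3:
  assumes n: "1 \<le> n"
  shows "(\<integral>\<omega>. \<bar>Ybar n \<omega> - mu\<bar> * of_bool (q_ev S T n \<omega>) \<partial>M) = (\<integral>\<omega>. \<bar>Ybar n \<omega> - mu\<bar> \<partial>M) * (\<integral>\<omega>. of_bool (q_ev S T n \<omega>) \<partial>M)"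
proof -
  define A :: "(nat + nat) set" where "A = Inl ` {1..n}"
  define B :: "(nat + nat) set" where "B = Inr ` {1..<n}"
  have AB: "A \<subseteq> II" "B \<subseteq> II" "A \<inter> B = {}" unfolding A_def B_def by auto
  have fm: "(\<lambda>v. \<bar>YbarP n v - mu\<bar>) \<in> borel_measurable (PiM A (\<lambda>_. borel))"
  proof -
    have [measurable]: "YbarP n \<in> borel_measurable (PiM A (\<lambda>_. borel))" by (rule YbarP_meas) (simp add: A_def)
    show ?thesis by measurable
  qed
  have gm: "(\<lambda>v. of_bool (q_ev ps T n v) :: real) \<in> borel_measurable (PiM B (\<lambda>_. borel))"
  proof -
    have [measurable]: "Measurable.pred (PiM B (\<lambda>_. borel)) (q_ev ps T n)" by (rule q_meas_Pi) (simp add: B_def)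
    show ?thesis by measurable
  qed
  have feq: "\<And>\<omega>. \<omega> \<in> space M \<Longrightarrow> \<bar>YbarP n (VV A \<omega>) - mu\<bar> = \<bar>Ybar n \<omega> - mu\<bar>"
    by (subst YbarP_eq) (auto simp: A_def)
  have geq: "\<And>\<omega>. \<omega> \<in> space M \<Longrightarrow> (of_bool (q_ev ps T n (VV B \<omega>)) :: real) = of_bool (q_ev S T n \<omega>)"
    by (subst q_eq) (auto simp: B_def)
  show ?thesis
    by (rule indep_factor2(1)[OF AB fm gm feq geq Ydev_integrable ind_integrable[OF q_pred]])
qed

lemma cross_zero:
  assumes i: "1 \<le> i" and j: "1 \<le> j" and ij: "i \<noteq> j"
  shows "(\<integral>\<omega>. (YY i \<omega> - mu) * (YY j \<omega> - mu) \<partial>M) = 0"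
proof -
  define A where "A = {Inl i :: nat + nat}"
  define B where "B = {Inl j :: nat + nat}"
  have AB: "A \<subseteq> II" "B \<subseteq> II" "A \<inter> B = {}" using i j ij unfolding A_def B_def by auto
  have fm: "(\<lambda>v. YP i v - mu) \<in> borel_measurable (PiM A (\<lambda>_. borel))"
  proof -
    have [measurable]: "YP i \<in> borel_measurable (PiM A (\<lambda>_. borel))" by (rule YP_meas) (simp add: A_def)
    show ?thesis by measurable
  qed
  have gm: "(\<lambda>v. YP j v - mu) \<in> borel_measurable (PiM B (\<lambda>_. borel))"
  proof -
    have [measurable]: "YP j \<in> borel_measurable (PiM B (\<lambda>_. borel))" by (rule YP_meas) (simp add: B_def)
    show ?thesis by measurable
  qed
  have feq: "\<And>\<omega>. \<omega> \<in> space M \<Longrightarrow> YP i (VV A \<omega>) - mu = YY i \<omega> - mu"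
    by (subst YP_eq) (use i in \<open>auto simp: A_def\<close>)
  have geq: "\<And>\<omega>. \<omega> \<in> space M \<Longrightarrow> YP j (VV B \<omega>) - mu = YY j \<omega> - mu"
    by (subst YP_eq) (use j in \<open>auto simp: B_def\<close>)
  have ii: "integrable M (\<lambda>\<omega>. YY i \<omega> - mu)" using YY_integrable[OF i] by simp
  have ji: "integrable M (\<lambda>\<omega>. YY j \<omega> - mu)" using YY_integrable[OF j] by simp
  have "(\<integral>\<omega>. YY i \<omega> - mu \<partial>M) = 0" using YY_mean[OF i] YY_integrable[OF i] by (simp add: prob_space)
  then show ?thesis using indep_factor2(1)[OF AB fm gm feq geq ii ji] by simp
qed

end

context setting begin

lemma YYdev_bound: "1 \<le> i \<Longrightarrow> \<omega> \<in> space M \<Longrightarrow> \<bar>YY i \<omega> - mu\<bar> \<le> D"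
  using YY_bounds[of i \<omega>] mu_bounds by (simp add: abs_le_iff)

lemma prod_integrable:
  assumes i: "1 \<le> i" and j: "1 \<le> j"
  shows "integrable M (\<lambda>\<omega>. (YY i \<omega> - mu) * (YY j \<omega> - mu))"
proof (rule bounded_integrable[where B="D * D"])
  show "(\<lambda>\<omega>. (YY i \<omega> - mu) * (YY j \<omega> - mu)) \<in> borel_measurable M" using i j by measurable
  fix \<omega> assume w: "\<omega> \<in> space M"
  show "\<bar>(YY i \<omega> - mu) * (YY j \<omega> - mu)\<bar> \<le> D * D"
    unfolding abs_mult by (rule mult_mono) (use YYdev_bound[OF i w] YYdev_bound[OF j w] D in auto)
qed

lemma var_bound:
  assumes i: "1 \<le> i"
  shows "(\<integral>\<omega>. (YY i \<omega> - mu) * (YY i \<omega> - mu) \<partial>M) \<le> D * D / 4"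
proof -
  have "(\<integral>\<omega>. (YY i \<omega> - mu) * (YY i \<omega> - mu) \<partial>M) \<le> (\<integral>\<omega>. (D - 2 * mu) * YY i \<omega> + mu * mu \<partial>M)"
  proof (rule integral_mono[OF prod_integrable[OF i i]])
    show "integrable M (\<lambda>\<omega>. (D - 2 * mu) * YY i \<omega> + mu * mu)"
      using YY_integrable[OF i] by simp
    fix \<omega> assume w: "\<omega> \<in> space M"
    have "YY i \<omega> * YY i \<omega> \<le> D * YY i \<omega>" using YY_bounds[OF i w] by (simp add: mult_right_mono)
    then show "(YY i \<omega> - mu) * (YY i \<omega> - mu) \<le> (D - 2 * mu) * YY i \<omega> + mu * mu"
      by (simp add: algebra_simps)
  qed
  also have "\<dots> = (D - 2 * mu) * mu + mu * mu"
    using YY_integrable[OF i] YY_mean[OF i] by (simp add: prob_space)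
  also have "\<dots> \<le> D * D / 4"
  proof -
    have "0 \<le> (D - 2 * mu) * (D - 2 * mu)" by simp
    then show ?thesis by (simp add: algebra_simps)
  qed
  finally show ?thesis .
qed

lemma Ybar_dev_eq:
  assumes n: "1 \<le> n"
  shows "Ybar n \<omega> - mu = (1 / real n) * (\<Sum>i=1..n. YY i \<omega> - mu)"
proof -
  have "(\<Sum>i=1..n. YY i \<omega> - mu) = (\<Sum>i=1..n. YY i \<omega>) - real n * mu"
    by (simp add: sum_subtractf)
  then show ?thesis using n unfolding Ybar_def by (simp add: field_simps)
qed

lemma second_moment:
  assumes n: "1 \<le> n"
  shows "(\<integral>\<omega>. (Ybar n \<omega> - mu) * (Ybar n \<omega> - mu) \<partial>M) \<le> D * D / (4 * real n)"
proof -
  let ?c = "\<lambda>i j. (\<integral>\<omega>. (YY i \<omega> - mu) * (YY j \<omega> - mu) \<partial>M)"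
  have eq: "\<And>\<omega>. (Ybar n \<omega> - mu) * (Ybar n \<omega> - mu) =
      (1 / (real n * real n)) * (\<Sum>i=1..n. \<Sum>j=1..n. (YY i \<omega> - mu) * (YY j \<omega> - mu))"
    unfolding Ybar_dev_eq[OF n] by (simp add: sum_product)
  have E1: "(\<integral>\<omega>. (Ybar n \<omega> - mu) * (Ybar n \<omega> - mu) \<partial>M) =
      (1 / (real n * real n)) * (\<integral>\<omega>. (\<Sum>i=1..n. \<Sum>j=1..n. (YY i \<omega> - mu) * (YY j \<omega> - mu)) \<partial>M)"
    unfolding eq by simp
  have "(\<integral>\<omega>. (\<Sum>i=1..n. \<Sum>j=1..n. (YY i \<omega> - mu) * (YY j \<omega> - mu)) \<partial>M) = (\<Sum>i=1..n. \<Sum>j=1..n. ?c i j)"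
  proof -
    have "(\<integral>\<omega>. (\<Sum>i=1..n. \<Sum>j=1..n. (YY i \<omega> - mu) * (YY j \<omega> - mu)) \<partial>M)
        = (\<Sum>i=1..n. (\<integral>\<omega>. (\<Sum>j=1..n. (YY i \<omega> - mu) * (YY j \<omega> - mu)) \<partial>M))"
      by (rule Bochner_Integration.integral_sum) (auto intro!: Bochner_Integration.integrable_sum prod_integrable)
    also have "\<dots> = (\<Sum>i=1..n. \<Sum>j=1..n. ?c i j)"
      by (rule sum.cong[OF refl], rule Bochner_Integration.integral_sum) (auto intro!: prod_integrable)
    finally show ?thesis .
  qed
  also have "(\<Sum>i=1..n. \<Sum>j=1..n. ?c i j) = (\<Sum>i=1..n. ?c i i)"
  proof (rule sum.cong[OF refl])
    fix i assume i: "i \<in> {1..n}"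
    have "(\<Sum>j=1..n. ?c i j) = ?c i i + (\<Sum>j\<in>{1..n} - {i}. ?c i j)"
      using i by (simp add: sum.remove)
    also have "(\<Sum>j\<in>{1..n} - {i}. ?c i j) = 0"
      by (rule sum.neutral) (use i in \<open>auto intro!: cross_zero\<close>)
    finally show "(\<Sum>j=1..n. ?c i j) = ?c i i" by simp
  qed
  also have "(\<Sum>i=1..n. ?c i i) \<le> (\<Sum>i=1..n. D * D / 4)"
    by (rule sum_mono) (use var_bound in simp)
  also have "\<dots> = real n * (D * D / 4)" by simp
  finally have I: "(\<integral>\<omega>. (\<Sum>i=1..n. \<Sum>j=1..n. (YY i \<omega> - mu) * (YY j \<omega> - mu)) \<partial>M) \<le> real n * (D * D / 4)" .
  have "(1 / (real n * real n)) * (\<integral>\<omega>. (\<Sum>i=1..n. \<Sum>j=1..n. (YY i \<omega> - mu) * (YY j \<omega> - mu)) \<partial>M)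
      \<le> (1 / (real n * real n)) * (real n * (D * D / 4))"
    by (rule mult_left_mono[OF I]) simp
  also have "\<dots> = D * D / (4 * real n)" using n by (simp add: field_simps)
  finally show ?thesis unfolding E1 .
qed

lemma abs_mean_sq:
  fixes W :: "'a \<Rightarrow> real"
  assumes Wm: "W \<in> borel_measurable M" and Wb: "\<And>\<omega>. \<omega> \<in> space M \<Longrightarrow> \<bar>W \<omega>\<bar> \<le> B"
  shows "(\<integral>\<omega>. \<bar>W \<omega>\<bar> \<partial>M) * (\<integral>\<omega>. \<bar>W \<omega>\<bar> \<partial>M) \<le> (\<integral>\<omega>. W \<omega> * W \<omega> \<partial>M)"
proof -
  define m where "m = (\<integral>\<omega>. \<bar>W \<omega>\<bar> \<partial>M)"
  have Wi: "integrable M (\<lambda>\<omega>. \<bar>W \<omega>\<bar>)"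
    by (rule bounded_integrable[where B=B]) (use Wm Wb in auto)
  have W2i: "integrable M (\<lambda>\<omega>. W \<omega> * W \<omega>)"
  proof (rule bounded_integrable[where B="B * B"])
    show "(\<lambda>\<omega>. W \<omega> * W \<omega>) \<in> borel_measurable M" using Wm by measurable
    fix \<omega> assume w: "\<omega> \<in> space M"
    show "\<bar>W \<omega> * W \<omega>\<bar> \<le> B * B" unfolding abs_mult by (rule mult_mono) (use Wb[OF w] in auto)
  qed
  have "0 \<le> (\<integral>\<omega>. (\<bar>W \<omega>\<bar> - m) * (\<bar>W \<omega>\<bar> - m) \<partial>M)"
    by (rule integral_nonneg_AE) simp
  also have "(\<integral>\<omega>. (\<bar>W \<omega>\<bar> - m) * (\<bar>W \<omega>\<bar> - m) \<partial>M) = (\<integral>\<omega>. W \<omega> * W \<omega> + ((- 2 * m) * \<bar>W \<omega>\<bar> + m * m) \<partial>M)"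
    by (rule Bochner_Integration.integral_cong) (auto simp: algebra_simps abs_mult_self_eq)
  also have "\<dots> = (\<integral>\<omega>. W \<omega> * W \<omega> \<partial>M) + (- 2 * m) * m + m * m"
    using Wi W2i by (simp add: m_def prob_space)
  finally show ?thesis unfolding m_def by simp
qed

lemma F4:
  assumes n: "1 \<le> n"
  shows "(\<integral>\<omega>. \<bar>Ybar n \<omega> - mu\<bar> \<partial>M) \<le> D / (2 * sqrt (real n))"
proof -
  let ?m = "(\<integral>\<omega>. \<bar>Ybar n \<omega> - mu\<bar> \<partial>M)"
  have "?m * ?m \<le> (\<integral>\<omega>. (Ybar n \<omega> - mu) * (Ybar n \<omega> - mu) \<partial>M)"
  proof (rule abs_mean_sq[where B=D])
    show "(\<lambda>\<omega>. Ybar n \<omega> - mu) \<in> borel_measurable M" by measurable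
    fix \<omega> assume w: "\<omega> \<in> space M"
    show "\<bar>Ybar n \<omega> - mu\<bar> \<le> D" using Ybar_bounds[OF w, of n] mu_bounds by (simp add: abs_le_iff)
  qed
  also have "\<dots> \<le> D * D / (4 * real n)" by (rule second_moment[OF n])
  also have "\<dots> = (D / (2 * sqrt (real n))) * (D / (2 * sqrt (real n)))"
    using n by (simp add: field_simps)
  finally have sq: "?m * ?m \<le> (D / (2 * sqrt (real n))) * (D / (2 * sqrt (real n)))" .
  define b where "b = D / (2 * sqrt (real n))"
  have b0: "0 \<le> b" using D by (simp add: b_def)
  show ?thesis unfolding b_def[symmetric]
  proof (rule ccontr)
    assume "\<not> ?m \<le> b"
    then have lt: "b < ?m" by simp
    have "b * b < ?m * ?m" by (rule mult_strict_mono[OF lt lt]) (use lt b0 in auto)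
    then show False using sq unfolding b_def by simp
  qed
qed

end

lemma G_deriv:
  "((\<lambda>x. exp (- x) * (\<Sum>j\<le>k. x ^ j / fact j)) has_real_derivative (- exp (- x) * x ^ k / fact k)) (at x)"
proof (induction k)
  case 0
  show ?case by (auto intro!: derivative_eq_intros)
next
  case (Suc k)
  have eq: "(\<lambda>x. exp (- x) * (\<Sum>j\<le>Suc k. x ^ j / fact j)) =
      (\<lambda>x. exp (- x) * (\<Sum>j\<le>k. x ^ j / fact j) + exp (- x) * (x ^ Suc k / fact (Suc k)))"
    by (simp add: distrib_left)
  have de: "((\<lambda>x. exp (- x)) has_real_derivative exp (- x) * (- 1)) (at x)"
    by (rule DERIV_fun_exp[OF DERIV_minus[OF DERIV_ident]])
  have dp: "((\<lambda>x. x ^ Suc k / fact (Suc k)) has_real_derivative (1 + real k) * (1 * x ^ k) / fact (Suc k)) (at x)"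
    by (rule DERIV_cdivide[OF DERIV_power_Suc[OF DERIV_ident]])
  have d2': "((\<lambda>x. exp (- x) * (x ^ Suc k / fact (Suc k))) has_real_derivative
       (exp (- x) * (- 1) * (x ^ Suc k / fact (Suc k)) + (1 + real k) * (1 * x ^ k) / fact (Suc k) * exp (- x))) (at x)"
    by (rule DERIV_mult[OF de dp])
  have "(exp (- x) * (- 1) * (x ^ Suc k / fact (Suc k)) + (1 + real k) * (1 * x ^ k) / fact (Suc k) * exp (- x))
      = (- exp (- x) * (x ^ Suc k / fact (Suc k)) + exp (- x) * (real (Suc k) * x ^ k / fact (Suc k)))"
    by (simp add: algebra_simps)
  note d2 = DERIV_cong[OF d2' this]
  have "((\<lambda>x. exp (- x) * (\<Sum>j\<le>k. x ^ j / fact j) + exp (- x) * (x ^ Suc k / fact (Suc k))) has_real_derivative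
      (- exp (- x) * x ^ k / fact k + (- exp (- x) * (x ^ Suc k / fact (Suc k)) + exp (- x) * (real (Suc k) * x ^ k / fact (Suc k))))) (at x)"
    by (rule DERIV_add[OF Suc.IH d2])
  moreover have "- exp (- x) * x ^ k / fact k + (- exp (- x) * (x ^ Suc k / fact (Suc k)) + exp (- x) * (real (Suc k) * x ^ k / fact (Suc k)))
      = - exp (- x) * x ^ Suc k / fact (Suc k)"
  proof -
    have f: "real (Suc k) / fact (Suc k) = 1 / fact k" by (simp add: fact_Suc del: of_nat_Suc)
    have "exp (- x) * (real (Suc k) * x ^ k / fact (Suc k)) = exp (- x) * x ^ k * (real (Suc k) / fact (Suc k))"
      by (simp add: field_simps)
    also have "\<dots> = exp (- x) * x ^ k / fact k" by (simp add: f)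
    finally show ?thesis by simp
  qed
  ultimately show ?case unfolding eq by (rule DERIV_cong)
qed

lemma expsum_le: "0 \<le> (x::real) \<Longrightarrow> (\<Sum>k<N. x ^ k / fact k) \<le> exp x"
proof -
  assume x: "0 \<le> x"
  have fe: "(\<lambda>n. x ^ n /\<^sub>R fact n) = (\<lambda>n. x ^ n / fact n)" by (simp add: fun_eq_iff divide_inverse_commute)
  have s: "(\<lambda>n. x ^ n / fact n) sums exp x" using exp_converges[of x] unfolding fe .
  have "(\<Sum>k<N. x ^ k / fact k) \<le> (\<Sum>n. x ^ n / fact n)"
    by (rule sum_le_suminf[OF sums_summable[OF s]]) (use x in auto)
  also have "\<dots> = exp x" using s by (simp add: sums_iff)
  finally show ?thesis .
qed

lemma erlang_partial_le:
  assumes x: "0 \<le> x"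
  shows "(\<Sum>k<N. erlang_CDF k 1 x) \<le> x"
proof -
  define G where "G k x = exp (- x) * (\<Sum>j\<le>k. x ^ j / fact j)" for k and x :: real
  define H where "H x = x - (\<Sum>k<N. 1 - G k x)" for x
  have cdf: "\<And>k y. 0 \<le> y \<Longrightarrow> erlang_CDF k 1 y = 1 - G k y"
    unfolding erlang_CDF_def G_def by (simp add: sum_distrib_left field_simps)
  have dH: "\<And>y. (H has_real_derivative (1 - exp (- y) * (\<Sum>k<N. y ^ k / fact k))) (at y)"
  proof -
    fix y :: real
    have "(H has_real_derivative (1 - (\<Sum>k<N. 0 - (- exp (- y) * y ^ k / fact k)))) (at y)"
      unfolding H_def G_def
      by (intro DERIV_diff DERIV_ident DERIV_sum DERIV_const G_deriv)
    moreover have "(\<Sum>k<N. 0 - (- exp (- y) * y ^ k / fact k)) = exp (- y) * (\<Sum>k<N. y ^ k / fact k)"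
      by (simp add: sum_distrib_left)
    ultimately show "(H has_real_derivative (1 - exp (- y) * (\<Sum>k<N. y ^ k / fact k))) (at y)" by simp
  qed
  have nn: "\<And>y. y \<in> {0..x} \<Longrightarrow> 0 \<le> 1 - exp (- y) * (\<Sum>k<N. y ^ k / fact k)"
  proof -
    fix y :: real assume "y \<in> {0..x}"
    then have "(\<Sum>k<N. y ^ k / fact k) \<le> exp y" by (intro expsum_le) auto
    then have "exp (- y) * (\<Sum>k<N. y ^ k / fact k) \<le> exp (- y) * exp y" by (simp add: mult_left_mono)
    also have "\<dots> = 1" by (simp add: exp_minus)
    finally show "0 \<le> 1 - exp (- y) * (\<Sum>k<N. y ^ k / fact k)" by simp
  qed
  have "H 0 \<le> H x"
    by (rule deriv_nonneg_imp_mono[OF dH nn x])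
  moreover have "H 0 = 0"
  proof -
    have "\<And>k. (\<Sum>j\<le>k. (0::real) ^ j / fact j) = 1"
    proof -
      fix k show "(\<Sum>j\<le>k. (0::real) ^ j / fact j) = 1" by (induction k) auto
    qed
    then have "\<And>k. G k 0 = 1" unfolding G_def by simp
    then show ?thesis unfolding H_def by simp
  qed
  ultimately have "(\<Sum>k<N. 1 - G k x) \<le> x" unfolding H_def by simp
  then show ?thesis using cdf[OF x] by simp
qed

lemma erlang_sum:
  assumes l: "0 < l" and T: "0 \<le> T"
  shows "summable (\<lambda>k. erlang_CDF k l T)" and "(\<Sum>k. erlang_CDF k l T) \<le> l * T"
proof -
  have eq: "\<And>k. erlang_CDF k l T = erlang_CDF k 1 (l * T)" by (rule erlang_CDF_transform[OF l])
  have b: "\<And>N. (\<Sum>k<N. erlang_CDF k l T) \<le> l * T"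
    unfolding eq by (rule erlang_partial_le) (use l T in simp)
  show "summable (\<lambda>k. erlang_CDF k l T)"
    by (rule summableI_nonneg_bounded[OF _ b]) (use l in simp)
  then show "(\<Sum>k. erlang_CDF k l T) \<le> l * T" by (rule suminf_le_const[OF _ b])
qed

lemma sqrt_sum_le: "(\<Sum>m<K. 1 / sqrt (real m + 1)) \<le> 2 * sqrt (real K)"
proof (induction K)
  case 0 then show ?case by simp
next
  case (Suc K)
  define a where "a = sqrt (real K + 1)"
  define b where "b = sqrt (real K)"
  have a0: "0 < a" unfolding a_def by simp
  have b0: "0 \<le> b" unfolding b_def by simp
  have ab: "b \<le> a" unfolding a_def b_def by simp
  have sq: "a * a - b * b = 1" unfolding a_def b_def by simp
  have "1 \<le> 2 * a * (a - b)"
  proof -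
    have "1 = (a - b) * (a + b)" using sq by (simp add: algebra_simps)
    also have "\<dots> \<le> (a - b) * (2 * a)" using ab by (intro mult_left_mono) auto
    finally show ?thesis by (simp add: mult_ac)
  qed
  then have "1 / a \<le> 2 * (a - b)" using a0 by (simp add: field_simps)
  then have "2 * b + 1 / a \<le> 2 * a" by simp
  moreover have "(\<Sum>m<Suc K. 1 / sqrt (real m + 1)) = (\<Sum>m<K. 1 / sqrt (real m + 1)) + 1 / a"
    by (simp add: a_def)
  ultimately show ?case using Suc.IH unfolding a_def b_def by (simp add: add.commute)
qed

lemma weighted_sum_bound:
  fixes p :: "nat \<Rightarrow> real" and s :: real
  assumes p0: "\<And>m. 0 \<le> p m" and p1: "\<And>m. p m \<le> 1" and ps: "\<And>N. (\<Sum>m<N. p m) \<le> s" and s1: "1 \<le> s"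
  shows "summable (\<lambda>m. p m / sqrt (real m + 1))" and "(\<Sum>m. p m / sqrt (real m + 1)) \<le> 2 * sqrt s"
proof -
  define K where "K = nat \<lfloor>s\<rfloor>"
  have Ks: "real K \<le> s" and sK: "s < real K + 1" unfolding K_def using s1 by linarith+
  define w where "w m = 1 / sqrt (real m + 1)" for m :: nat
  have wdec: "\<And>m n. m \<le> n \<Longrightarrow> w n \<le> w m" unfolding w_def by (simp add: frac_le)
  have w0: "\<And>m. 0 \<le> w m" unfolding w_def by simp
  define B where "B = (\<Sum>m<K. w m) + w K * (s - real K)"
  have trm: "\<And>m. p m * w m \<le> (if m < K then w m else 0) + (p m - (if m < K then 1 else 0)) * w K"
  proof -
    fix m
    show "p m * w m \<le> (if m < K then w m else 0) + (p m - (if m < K then 1 else 0)) * w K"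
    proof (cases "m < K")
      case True
      have "(p m - 1) * w m \<le> (p m - 1) * w K"
        using p1[of m] wdec[of m K] True by (intro mult_left_mono_neg) auto
      then show ?thesis using True by (simp add: algebra_simps)
    next
      case False
      then show ?thesis using wdec[of K m] p0[of m] by (simp add: mult_left_mono)
    qed
  qed
  have part: "\<And>N. (\<Sum>m<N. p m * w m) \<le> B"
  proof -
    fix N
    show "(\<Sum>m<N. p m * w m) \<le> B"
    proof (cases "N \<le> K")
      case True
      have "(\<Sum>m<N. p m * w m) \<le> (\<Sum>m<N. w m)"
        by (rule sum_mono) (use p0 p1 w0 in \<open>auto intro!: mult_left_le_one_le\<close>)
      also have "\<dots> \<le> (\<Sum>m<K. w m)" using True w0 by (intro sum_mono2) auto
      also have "\<dots> \<le> B" unfolding B_def using w0[of K] Ks by simp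
      finally show ?thesis .
    next
      case False
      have I: "{..<N} \<inter> {m. m < K} = {..<K}" using False by auto
      have e1: "(\<Sum>m<N. (if m < K then w m else (0::real))) = (\<Sum>m<K. w m)"
        by (simp add: sum.If_cases I)
      have e2: "(\<Sum>m<N. (if m < K then 1 else (0::real))) = real K"
        by (simp add: sum.If_cases I)
      have "(\<Sum>m<N. p m * w m) \<le> (\<Sum>m<N. (if m < K then w m else 0) + (p m - (if m < K then 1 else 0)) * w K)"
        by (rule sum_mono) (rule trm)
      also have "\<dots> = (\<Sum>m<N. (if m < K then w m else 0)) + w K * ((\<Sum>m<N. p m) - (\<Sum>m<N. (if m < K then 1 else 0)))"
        by (simp add: sum.distrib sum_subtractf sum_distrib_left algebra_simps)
      also have "\<dots> = (\<Sum>m<K. w m) + w K * ((\<Sum>m<N. p m) - real K)"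
        unfolding e1 e2 ..
      also have "\<dots> \<le> B"
        unfolding B_def using ps[of N] w0[of K] by (simp add: mult_left_mono)
      finally show ?thesis .
    qed
  qed
  have pw0: "\<And>m. 0 \<le> p m * w m" using p0 w0 by simp
  have summ: "summable (\<lambda>m. p m * w m)" by (rule summableI_nonneg_bounded[OF pw0 part])
  then show "summable (\<lambda>m. p m / sqrt (real m + 1))" unfolding w_def by simp
  have "(\<Sum>m. p m * w m) \<le> B" by (rule suminf_le_const[OF summ part])
  also have "B \<le> 2 * sqrt s"
  proof -
    define a where "a = sqrt (real K + 1)"
    define b where "b = sqrt (real K)"
    define c where "c = sqrt s"
    have a0: "0 < a" unfolding a_def by simp
    have bc: "b \<le> c" unfolding b_def c_def using Ks by simp
    have ca: "c \<le> a" unfolding a_def c_def using sK by simp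
    have b0: "0 \<le> b" unfolding b_def by simp
    have u: "s - real K = (c - b) * (c + b)" unfolding b_def c_def using Ks s1 by (simp add: algebra_simps)
    have "(c - b) * (c + b) \<le> (c - b) * (2 * a)" using bc ca b0 by (intro mult_left_mono) auto
    then have "(s - real K) / a \<le> 2 * (c - b)" using a0 u by (simp add: field_simps)
    moreover have "(\<Sum>m<K. w m) \<le> 2 * b" unfolding w_def b_def by (rule sqrt_sum_le)
    moreover have "B = (\<Sum>m<K. w m) + (s - real K) / a" unfolding B_def w_def a_def by simp
    ultimately have "B \<le> 2 * b + 2 * (c - b)" by (simp add: c_def)
    then show ?thesis unfolding c_def by (simp add: algebra_simps)
  qed
  finally show "(\<Sum>m. p m / sqrt (real m + 1)) \<le> 2 * sqrt s" unfolding w_def by simp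
qed

lemma theta_eq: "alg_theta lam r X S T \<omega> = (LEAST n. 1 \<le> n \<and> psum lam r X S n \<omega> > T)"
  unfolding alg_theta_def psum_def ..

lemma theta_props:
  assumes ex: "\<exists>n. 1 \<le> n \<and> psum lam r X S n \<omega> > T"
  shows "1 \<le> alg_theta lam r X S T \<omega>" and "psum lam r X S (alg_theta lam r X S T \<omega>) \<omega> > T"
    and "\<And>n. (1 \<le> n \<and> ge_ev lam r X S T n \<omega>) \<longleftrightarrow> n \<in> {1..alg_theta lam r X S T \<omega>}"
proof -
  let ?P = "\<lambda>n. 1 \<le> n \<and> psum lam r X S n \<omega> > T"
  let ?t = "alg_theta lam r X S T \<omega>"
  have t: "?t = (LEAST n. ?P n)" by (rule theta_eq)
  have Pt: "?P ?t" unfolding t by (rule LeastI_ex[OF ex])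
  then show "1 \<le> ?t" and "psum lam r X S ?t \<omega> > T" by auto
  have lt: "\<And>j. j < ?t \<Longrightarrow> \<not> ?P j" unfolding t by (rule not_less_Least)
  fix n
  show "(1 \<le> n \<and> ge_ev lam r X S T n \<omega>) \<longleftrightarrow> n \<in> {1..?t}"
  proof
    assume a: "1 \<le> n \<and> ge_ev lam r X S T n \<omega>"
    show "n \<in> {1..?t}"
    proof (rule ccontr)
      assume "n \<notin> {1..?t}"
      then have "?t \<in> {1..<n}" using a Pt by auto
      then have "psum lam r X S ?t \<omega> \<le> T" using a unfolding ge_ev_def by blast
      then show False using Pt by simp
    qed
  next
    assume n: "n \<in> {1..?t}"
    have "\<And>j. j \<in> {1..<n} \<Longrightarrow> psum lam r X S j \<omega> \<le> T"
    proof -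
      fix j assume "j \<in> {1..<n}"
      then have "j < ?t" "1 \<le> j" using n by auto
      then show "psum lam r X S j \<omega> \<le> T" using lt by force
    qed
    then show "1 \<le> n \<and> ge_ev lam r X S T n \<omega>" using n unfolding ge_ev_def by auto
  qed
qed

context setting begin

lemma S_indep: "indep_vars (\<lambda>_. borel) S {1..n}"
proof -
  have "indep_vars (\<lambda>j. PiM {Inr j} (\<lambda>_. borel)) (\<lambda>j \<omega>. restrict (\<lambda>i. ZZ i \<omega>) {Inr j}) {1..n}"
    by (rule indep_vars_restrict[OF ind]) (auto simp: disjoint_family_on_def)
  then have "indep_vars (\<lambda>_. borel) (\<lambda>j \<omega>. (\<lambda>v. v (Inr j)) (restrict (\<lambda>i. ZZ i \<omega>) {Inr j})) {1..n}"
    by (rule indep_vars_compose2) measurable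
  then show ?thesis by (rule indep_vars_cong[THEN iffD1, rotated -1]) auto
qed

lemma gam_distr: "1 \<le> n \<Longrightarrow> distributed M lborel (gam S n) (erlang_density (n - 1) lam)"
proof -
  assume n: "1 \<le> n"
  have "distributed M lborel (\<lambda>x. \<Sum>i\<in>{1..n}. S i x) (erlang_density (card {1..n} - 1) lam)"
    by (rule exponential_distributed_sum[OF _ _ lam _ S_indep]) (use n S_dist in auto)
  then show ?thesis unfolding gam_def[abs_def] by simp
qed

lemma gam_meas[measurable]: "gam S n \<in> borel_measurable M"
  unfolding gam_def[abs_def] by (rule borel_measurable_sum) auto

lemma prob_gam: "1 \<le> n \<Longrightarrow> measure M {\<omega> \<in> space M. gam S n \<omega> \<le> T} = erlang_CDF (n - 1) lam T"
  using erlang_distributed_le[OF gam_distr lam, of n T] T by simp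

definition pq :: "nat \<Rightarrow> real" where
  "pq n = (\<integral>\<omega>. of_bool (q_ev S T n \<omega>) \<partial>M)"

lemma int_of_bool: "Measurable.pred M P \<Longrightarrow> (\<integral>\<omega>. of_bool (P \<omega>) \<partial>M) = measure M {\<omega> \<in> space M. P \<omega>}"
proof -
  assume P: "Measurable.pred M P"
  have "(\<integral>\<omega>. of_bool (P \<omega>) \<partial>M) = (\<integral>\<omega>. indicator {\<omega> \<in> space M. P \<omega>} \<omega> \<partial>M)"
    by (rule Bochner_Integration.integral_cong) (auto simp: indicator_def)
  also have "\<dots> = measure M {\<omega> \<in> space M. P \<omega>}" by (simp add: Int_absorb2 Collect_subset)
  finally show ?thesis .
qed

lemma pq_bounds: "0 \<le> pq n \<and> pq n \<le> 1"
  unfolding pq_def int_of_bool[OF q_pred] by (simp add: measure_nonneg)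

lemma pq_le: "pq (m + 2) \<le> erlang_CDF m lam T"
proof -
  have "pq (m + 2) = measure M {\<omega> \<in> space M. q_ev S T (m + 2) \<omega>}"
    unfolding pq_def by (rule int_of_bool[OF q_pred])
  also have "\<dots> \<le> measure M {\<omega> \<in> space M. gam S (m + 1) \<omega> \<le> T}"
    by (rule finite_measure_mono) (auto simp: q_ev_def)
  also have "\<dots> = erlang_CDF m lam T" using prob_gam[of "m + 1"] by simp
  finally show ?thesis .
qed

lemma pq_summable: "summable pq"
proof -
  have "summable (\<lambda>m. pq (m + 2))"
  proof (rule summable_comparison_test[OF _ erlang_sum(1)[OF lam, of T]])
    show "\<exists>N. \<forall>n\<ge>N. norm (pq (n + 2)) \<le> erlang_CDF n lam T"
      using pq_le pq_bounds by auto
  qed (use T in simp)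
  then show ?thesis using summable_iff_shift[of pq 2] by simp
qed

lemma pq_partial: "(\<Sum>m<N. pq (m + 1)) \<le> lam * T + 1"
proof (cases N)
  case 0 then show ?thesis using lam T by simp
next
  case (Suc K)
  have "(\<Sum>m<N. pq (m + 1)) = pq 1 + (\<Sum>m<K. pq (m + 2))"
    unfolding Suc by (subst sum.lessThan_Suc_shift) simp
  also have "(\<Sum>m<K. pq (m + 2)) \<le> (\<Sum>m<K. erlang_CDF m lam T)" by (rule sum_mono) (rule pq_le)
  also have "(\<Sum>m<K. erlang_CDF m lam T) \<le> (\<Sum>m. erlang_CDF m lam T)"
    by (rule sum_le_suminf[OF erlang_sum(1)[OF lam]]) (use T lam in auto)
  also have "\<dots> \<le> lam * T" by (rule erlang_sum(2)[OF lam]) (use T in simp)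
  finally show ?thesis using pq_bounds[of 1] by linarith
qed

lemma AE_exceed: "AE \<omega> in M. \<exists>n. 1 \<le> n \<and> gam S n \<omega> > T"
proof (rule AE_I)
  let ?N = "{\<omega> \<in> space M. \<forall>n. 1 \<le> n \<longrightarrow> gam S n \<omega> \<le> T}"
  show "{\<omega> \<in> space M. \<not> (\<exists>n. 1 \<le> n \<and> gam S n \<omega> > T)} \<subseteq> ?N" by (auto simp: not_less)
  show Ns: "?N \<in> sets M" by measurable
  have le: "\<And>m. measure M ?N \<le> erlang_CDF m lam T"
  proof -
    fix m
    have "measure M ?N \<le> measure M {\<omega> \<in> space M. gam S (m + 1) \<omega> \<le> T}"
      by (rule finite_measure_mono) auto
    also have "\<dots> = erlang_CDF m lam T" using prob_gam[of "m + 1"] by simp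
    finally show "measure M ?N \<le> erlang_CDF m lam T" .
  qed
  have "(\<lambda>m. erlang_CDF m lam T) \<longlonglongrightarrow> 0"
    by (rule summable_LIMSEQ_zero[OF erlang_sum(1)[OF lam]]) (use T in simp)
  then have "measure M ?N \<le> 0" by (rule LIMSEQ_le_const) (use le in auto)
  then have "measure M ?N = 0" by (simp add: measure_nonneg antisym)
  then show "emeasure M ?N = 0" by (simp add: emeasure_eq_measure)
qed

lemma psum_ge_gam: "\<omega> \<in> space M \<Longrightarrow> gam S n \<omega> \<le> psum lam r X S n \<omega>"
  unfolding psum_def gam_def
proof (rule sum_mono)
  fix i assume i: "i \<in> {1..n}" and w: "\<omega> \<in> space M"
  have "0 \<le> X i \<omega> * alg_action lam r X i \<omega>"
    using X_nonneg[of i \<omega>] i w by (simp add: alg_action_def)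
  then show "S i \<omega> \<le> S i \<omega> + X i \<omega> * alg_action lam r X i \<omega>" by simp
qed

lemma AE_good: "AE \<omega> in M. \<exists>n. 1 \<le> n \<and> psum lam r X S n \<omega> > T"
  using AE_exceed
proof (rule AE_mp)
  show "AE \<omega> in M. (\<exists>n. 1 \<le> n \<and> gam S n \<omega> > T) \<longrightarrow> (\<exists>n. 1 \<le> n \<and> psum lam r X S n \<omega> > T)"
    using psum_ge_gam by (intro AE_I2) (meson less_le_trans)
qed

lemma psum_meas[measurable]: "psum lam r X S n \<in> borel_measurable M"
  by (rule psum_measurable) (use lam rm X_nonneg in auto)

lemma act_meas[measurable]: "1 \<le> n \<Longrightarrow> alg_action lam r X n \<in> borel_measurable M"
  by (rule alg_action_measurable) (use lam rm X_nonneg in auto)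

lemma reward_meas[measurable]: "alg_reward lam r X S T \<in> borel_measurable M"
proof -
  have [measurable]: "r \<in> borel_measurable borel" by (rule rm)
  have th: "alg_theta lam r X S T \<in> measurable M (count_space UNIV)"
    unfolding theta_eq[abs_def] by measurable
  have f: "\<And>k. (\<lambda>\<omega>. \<Sum>n=1..k. r (X n \<omega>) * alg_action lam r X n \<omega>) \<in> borel_measurable M"
    by (rule borel_measurable_sum) auto
  show ?thesis unfolding alg_reward_def[abs_def]
    by (rule measurable_compose_countable'[OF f th]) simp
qed

end

context setting begin

abbreviation "gE n \<omega> \<equiv> ge_ev lam r X S T n \<omega>"
abbreviation "act n \<omega> \<equiv> alg_action lam r X n \<omega>"

lemma act01: "act n \<omega> = 0 \<or> act n \<omega> = 1"
  unfolding alg_action_def by auto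

lemma ge_imp_q: "\<omega> \<in> space M \<Longrightarrow> gE n \<omega> \<Longrightarrow> q_ev S T n \<omega>"
proof -
  assume w: "\<omega> \<in> space M" and g: "gE n \<omega>"
  have "\<And>j. j \<in> {1..<n} \<Longrightarrow> gam S j \<omega> \<le> T"
  proof -
    fix j assume "j \<in> {1..<n}"
    then have "psum lam r X S j \<omega> \<le> T" using g unfolding ge_ev_def by blast
    then show "gam S j \<omega> \<le> T" using psum_ge_gam[OF w, of j] by linarith
  qed
  then show ?thesis unfolding q_ev_def by blast
qed

lemma Pge_le: "1 \<le> n \<Longrightarrow> (\<integral>\<omega>. of_bool (gE n \<omega>) \<partial>M) \<le> pq n"
  unfolding pq_def
  by (rule integral_mono[OF ind_integrable[OF ge_pred] ind_integrable[OF q_pred]]) (auto dest: ge_imp_q)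

lemma series_tool:
  fixes F :: "nat \<Rightarrow> 'a \<Rightarrow> real" and K :: real
  assumes Fi: "\<And>n. integrable M (F n)"
    and F0: "\<And>n \<omega>. \<omega> \<in> space M \<Longrightarrow> \<not> (1 \<le> n \<and> gE n \<omega>) \<Longrightarrow> F n \<omega> = 0"
    and Fb: "\<And>n. (\<integral>\<omega>. norm (F n \<omega>) \<partial>M) \<le> K * pq n"
  shows "integrable M (\<lambda>\<omega>. \<Sum>n. F n \<omega>)" "(\<integral>\<omega>. (\<Sum>n. F n \<omega>) \<partial>M) = (\<Sum>n. \<integral>\<omega>. F n \<omega> \<partial>M)"
    "summable (\<lambda>n. \<integral>\<omega>. F n \<omega> \<partial>M)"
proof -
  have AS: "AE \<omega> in M. summable (\<lambda>n. norm (F n \<omega>))"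
    using AE_good
  proof (rule AE_mp)
    show "AE \<omega> in M. (\<exists>n. 1 \<le> n \<and> psum lam r X S n \<omega> > T) \<longrightarrow> summable (\<lambda>n. norm (F n \<omega>))"
    proof (rule AE_I2, rule impI)
      fix \<omega> assume w: "\<omega> \<in> space M" and ex: "\<exists>n. 1 \<le> n \<and> psum lam r X S n \<omega> > T"
      show "summable (\<lambda>n. norm (F n \<omega>))"
      proof (rule summable_finite[of "{1..alg_theta lam r X S T \<omega>}"])
        fix n assume "n \<notin> {1..alg_theta lam r X S T \<omega>}"
        then have "\<not> (1 \<le> n \<and> gE n \<omega>)" using theta_props(3)[OF ex] by blast
        then show "norm (F n \<omega>) = 0" using F0 w by simp
      qed simp
    qed
  qed
  have SS: "summable (\<lambda>n. \<integral>\<omega>. norm (F n \<omega>) \<partial>M)"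
  proof (rule summable_comparison_test[OF _ summable_mult[OF pq_summable, of K]])
    show "\<exists>N. \<forall>n\<ge>N. norm (\<integral>\<omega>. norm (F n \<omega>) \<partial>M) \<le> K * pq n"
      using Fb by (auto simp: integral_nonneg_AE)
  qed
  show "integrable M (\<lambda>\<omega>. \<Sum>n. F n \<omega>)" by (rule integrable_suminf[OF Fi AS SS])
  show "(\<integral>\<omega>. (\<Sum>n. F n \<omega>) \<partial>M) = (\<Sum>n. \<integral>\<omega>. F n \<omega> \<partial>M)" by (rule integral_suminf[OF Fi AS SS])
  show "summable (\<lambda>n. \<integral>\<omega>. F n \<omega> \<partial>M)" by (rule summable_integral[OF Fi AS SS])
qed

definition RR :: "nat \<Rightarrow> 'a \<Rightarrow> real" where
  "RR n \<omega> = of_bool (1 \<le> n \<and> gE n \<omega>) * (r (X n \<omega>) * act n \<omega>)"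

definition HH :: "nat \<Rightarrow> 'a \<Rightarrow> real" where
  "HH n \<omega> = of_bool (1 \<le> n \<and> gE n \<omega>) * (cstar * S n \<omega> + cstar * X n \<omega> * act n \<omega> - r (X n \<omega>) * act n \<omega>)"

lemma RR_meas[measurable]: "RR n \<in> borel_measurable M"
proof (cases "n = 0")
  case True then show ?thesis unfolding RR_def[abs_def] by simp
next
  case False
  then have n: "1 \<le> n" by simp
  have [measurable]: "r \<in> borel_measurable borel" by (rule rm)
  have [measurable]: "X n \<in> borel_measurable M" "act n \<in> borel_measurable M" "Measurable.pred M (gE n)"
    using n by (auto intro: Xm act_meas ge_pred)
  show ?thesis unfolding RR_def[abs_def] by measurable
qed

lemma rX_abs: "1 \<le> n \<Longrightarrow> \<omega> \<in> space M \<Longrightarrow> \<bar>r (X n \<omega>) * act n \<omega>\<bar> \<le> D - E"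
proof -
  assume n: "1 \<le> n" and w: "\<omega> \<in> space M"
  have "\<bar>r (X n \<omega>)\<bar> \<le> D - E" using r_bounds[OF n w] D E by auto
  then show ?thesis using act01[of n \<omega>] D E by (auto simp: abs_mult)
qed

lemma RR_integrable: "integrable M (RR n)"
  by (rule bounded_integrable[where B="D - E"]) (use rX_abs D E in \<open>auto simp: RR_def\<close>)

lemma RR_normint: "(\<integral>\<omega>. norm (RR n \<omega>) \<partial>M) \<le> (D - E) * pq n"
proof (cases "n = 0")
  case True then show ?thesis using pq_bounds[of n] D E by (simp add: RR_def)
next
  case False
  then have n: "1 \<le> n" by simp
  have "(\<integral>\<omega>. norm (RR n \<omega>) \<partial>M) \<le> (\<integral>\<omega>. (D - E) * of_bool (gE n \<omega>) \<partial>M)"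
  proof (rule integral_mono)
    show "integrable M (\<lambda>\<omega>. norm (RR n \<omega>))" by (rule integrable_norm[OF RR_integrable])
    show "integrable M (\<lambda>\<omega>. (D - E) * of_bool (gE n \<omega>))" using ind_integrable[OF ge_pred[OF n]] by simp
    fix \<omega> assume w: "\<omega> \<in> space M"
    show "norm (RR n \<omega>) \<le> (D - E) * of_bool (gE n \<omega>)"
      using rX_abs[OF n w] D E n by (auto simp: RR_def)
  qed
  also have "\<dots> = (D - E) * (\<integral>\<omega>. of_bool (gE n \<omega>) \<partial>M)" by simp
  also have "\<dots> \<le> (D - E) * pq n" using Pge_le[OF n] D E by (intro mult_left_mono) auto
  finally show ?thesis .
qed


end

context setting begin

lemma ell_meas[measurable]: "1 \<le> n \<Longrightarrow> ell n \<in> borel_measurable M"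
proof -
  assume n: "1 \<le> n"
  have [measurable]: "r \<in> borel_measurable borel" by (rule rm)
  have [measurable]: "X n \<in> borel_measurable M" "act n \<in> borel_measurable M" "YY n \<in> borel_measurable M"
    using n by (auto intro: Xm act_meas YY_meas)
  show ?thesis unfolding ell_def[abs_def] by measurable
qed

lemma cX_abs: "1 \<le> n \<Longrightarrow> \<omega> \<in> space M \<Longrightarrow> \<bar>cstar * X n \<omega> * act n \<omega>\<bar> \<le> cstar * C"
proof -
  assume n: "1 \<le> n" and w: "\<omega> \<in> space M"
  have "0 \<le> cstar * X n \<omega>" "cstar * X n \<omega> \<le> cstar * C"
    using cstar_nonneg X_nonneg[OF n w] X_le[OF n w] by (auto intro: mult_left_mono)
  then show ?thesis using act01[of n \<omega>] by auto
qed

lemma gell_integrable: "1 \<le> n \<Longrightarrow> integrable M (\<lambda>\<omega>. of_bool (gE n \<omega>) * ell n \<omega>)"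
proof -
  assume n: "1 \<le> n"
  have [measurable]: "Measurable.pred M (gE n)" using n by (rule ge_pred)
  have [measurable]: "ell n \<in> borel_measurable M" using n by (rule ell_meas)
  show ?thesis
  proof (rule bounded_integrable[where B="D + (D - E) + cstar * C"])
    show "(\<lambda>\<omega>. of_bool (gE n \<omega>) * ell n \<omega>) \<in> borel_measurable M" by measurable
    fix \<omega> assume w: "\<omega> \<in> space M"
    have "\<bar>ell n \<omega>\<bar> \<le> D + (D - E) + cstar * C"
    proof -
      have "ell n \<omega> = YY n \<omega> - r (X n \<omega>) * act n \<omega> + cstar * X n \<omega> * act n \<omega>"
        unfolding ell_def by (simp add: algebra_simps)
      then show ?thesis using YY_bounds[OF n w] rX_abs[OF n w] cX_abs[OF n w] by linarith
    qed
    then show "\<bar>of_bool (gE n \<omega>) * ell n \<omega>\<bar> \<le> D + (D - E) + cstar * C"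
      using D E cstar_nonneg C by auto
  qed
qed

lemma HH_decomp:
  assumes n: "1 \<le> n"
  shows "HH n \<omega> = cstar * (of_bool (gE n \<omega>) * S n \<omega>) - of_bool (gE n \<omega>) * YY n \<omega> + of_bool (gE n \<omega>) * ell n \<omega>"
  using n unfolding HH_def ell_def by (cases "gE n \<omega>") (auto simp: algebra_simps)

lemma HH_int:
  assumes n: "1 \<le> n"
  shows "integrable M (HH n)" and "(\<integral>\<omega>. HH n \<omega> \<partial>M) = (\<integral>\<omega>. of_bool (gE n \<omega>) * ell n \<omega> \<partial>M)"
proof -
  have eq: "HH n = (\<lambda>\<omega>. cstar * (of_bool (gE n \<omega>) * S n \<omega>) - of_bool (gE n \<omega>) * YY n \<omega> + of_bool (gE n \<omega>) * ell n \<omega>)"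
    using HH_decomp[OF n] by blast
  have i1: "integrable M (\<lambda>\<omega>. cstar * (of_bool (gE n \<omega>) * S n \<omega>))" using F1(2)[OF n] by simp
  have i2: "integrable M (\<lambda>\<omega>. of_bool (gE n \<omega>) * YY n \<omega>)" by (rule F2(2)[OF n])
  have i3: "integrable M (\<lambda>\<omega>. of_bool (gE n \<omega>) * ell n \<omega>)" by (rule gell_integrable[OF n])
  show "integrable M (HH n)" unfolding eq using i1 i2 i3 by simp
  have "(\<integral>\<omega>. HH n \<omega> \<partial>M) = cstar * (\<integral>\<omega>. of_bool (gE n \<omega>) * S n \<omega> \<partial>M) - (\<integral>\<omega>. of_bool (gE n \<omega>) * YY n \<omega> \<partial>M)
      + (\<integral>\<omega>. of_bool (gE n \<omega>) * ell n \<omega> \<partial>M)"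
    unfolding eq using i1 i2 i3 F1(2)[OF n] by simp
  also have "\<dots> = (\<integral>\<omega>. of_bool (gE n \<omega>) * ell n \<omega> \<partial>M)"
    unfolding F1(1)[OF n] F2(1)[OF n] using lam by (simp add: cstar_eq)
  finally show "(\<integral>\<omega>. HH n \<omega> \<partial>M) = (\<integral>\<omega>. of_bool (gE n \<omega>) * ell n \<omega> \<partial>M)" .
qed

lemma gell_bound:
  assumes n: "1 \<le> n"
  shows "(\<integral>\<omega>. of_bool (gE n \<omega>) * ell n \<omega> \<partial>M) \<le> lam * C * D / 2 * (pq n / sqrt (real n))"
proof -
  have "(\<integral>\<omega>. of_bool (gE n \<omega>) * ell n \<omega> \<partial>M) \<le> (\<integral>\<omega>. lam * C * (\<bar>Ybar n \<omega> - mu\<bar> * of_bool (q_ev S T n \<omega>)) \<partial>M)"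
  proof (rule integral_mono[OF gell_integrable[OF n]])
    show "integrable M (\<lambda>\<omega>. lam * C * (\<bar>Ybar n \<omega> - mu\<bar> * of_bool (q_ev S T n \<omega>)))"
    proof -
      have "integrable M (\<lambda>\<omega>. \<bar>Ybar n \<omega> - mu\<bar> * of_bool (q_ev S T n \<omega>))"
      proof (rule bounded_integrable[where B=D])
        show "(\<lambda>\<omega>. \<bar>Ybar n \<omega> - mu\<bar> * of_bool (q_ev S T n \<omega>)) \<in> borel_measurable M" by measurable
        fix \<omega> assume w: "\<omega> \<in> space M"
        have "\<bar>Ybar n \<omega> - mu\<bar> \<le> D" using Ybar_bounds[OF w, of n] mu_bounds by (simp add: abs_le_iff)
        then show "\<bar>\<bar>Ybar n \<omega> - mu\<bar> * of_bool (q_ev S T n \<omega>)\<bar> \<le> D" using D by auto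
      qed
      then show ?thesis by simp
    qed
    fix \<omega> assume w: "\<omega> \<in> space M"
    show "of_bool (gE n \<omega>) * ell n \<omega> \<le> lam * C * (\<bar>Ybar n \<omega> - mu\<bar> * of_bool (q_ev S T n \<omega>))"
    proof (cases "gE n \<omega>")
      case True
      then have "q_ev S T n \<omega>" by (rule ge_imp_q[OF w])
      then show ?thesis using True ell_bound2[OF n w] by (simp add: mult_ac)
    next
      case False
      have "0 \<le> lam * C * (\<bar>Ybar n \<omega> - mu\<bar> * of_bool (q_ev S T n \<omega>))" using lam C by simp
      then show ?thesis using False by simp
    qed
  qed
  also have "\<dots> = lam * C * ((\<integral>\<omega>. \<bar>Ybar n \<omega> - mu\<bar> \<partial>M) * pq n)"
    unfolding pq_def F3[OF n, symmetric] by simp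
  also have "\<dots> \<le> lam * C * (D / (2 * sqrt (real n)) * pq n)"
    using F4[OF n] pq_bounds[of n] lam C by (intro mult_left_mono mult_right_mono) auto
  also have "\<dots> = lam * C * D / 2 * (pq n / sqrt (real n))" by (simp add: field_simps)
  finally show ?thesis .
qed

end

context setting begin

definition KK :: real where "KK = cstar / lam + cstar * C + (D - E)"

lemma KK_nonneg: "0 \<le> KK"
  unfolding KK_def using cstar_nonneg lam C D E by simp

lemma HH0: "HH 0 \<omega> = 0" unfolding HH_def by simp

lemma HH_integrable: "integrable M (HH n)"
proof (cases "n = 0")
  case True
  have "HH n = (\<lambda>\<omega>. 0)" using True by (simp add: fun_eq_iff HH0)
  then show ?thesis by simp
next
  case False then show ?thesis by (simp add: HH_int(1))
qed

lemma HH_normint: "(\<integral>\<omega>. norm (HH n \<omega>) \<partial>M) \<le> KK * pq n"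
proof (cases "n = 0")
  case True then show ?thesis using pq_bounds[of n] KK_nonneg by (simp add: HH0)
next
  case False
  then have n: "1 \<le> n" by simp
  let ?g = "\<lambda>\<omega>. of_bool (gE n \<omega>) :: real"
  have gi: "integrable M ?g" by (rule ind_integrable[OF ge_pred[OF n]])
  have gSi: "integrable M (\<lambda>\<omega>. \<bar>?g \<omega> * S n \<omega>\<bar>)" by (rule integrable_abs[OF F1(2)[OF n]])
  have "(\<integral>\<omega>. norm (HH n \<omega>) \<partial>M) \<le> (\<integral>\<omega>. cstar * \<bar>?g \<omega> * S n \<omega>\<bar> + (cstar * C + (D - E)) * ?g \<omega> \<partial>M)"
  proof (rule integral_mono)
    show "integrable M (\<lambda>\<omega>. norm (HH n \<omega>))" by (rule integrable_norm[OF HH_integrable])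
    show "integrable M (\<lambda>\<omega>. cstar * \<bar>?g \<omega> * S n \<omega>\<bar> + (cstar * C + (D - E)) * ?g \<omega>)"
      using gi gSi by simp
    fix \<omega> assume w: "\<omega> \<in> space M"
    show "norm (HH n \<omega>) \<le> cstar * \<bar>?g \<omega> * S n \<omega>\<bar> + (cstar * C + (D - E)) * ?g \<omega>"
    proof (cases "gE n \<omega>")
      case True
      have "\<bar>cstar * S n \<omega> + cstar * X n \<omega> * act n \<omega> - r (X n \<omega>) * act n \<omega>\<bar>
          \<le> cstar * \<bar>S n \<omega>\<bar> + cstar * C + (D - E)"
      proof -
        have a1: "\<bar>cstar * S n \<omega>\<bar> = cstar * \<bar>S n \<omega>\<bar>" using cstar_nonneg by (simp add: abs_mult)
        have t1: "\<bar>cstar * S n \<omega> + cstar * X n \<omega> * act n \<omega> - r (X n \<omega>) * act n \<omega>\<bar>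
            \<le> \<bar>cstar * S n \<omega> + cstar * X n \<omega> * act n \<omega>\<bar> + \<bar>r (X n \<omega>) * act n \<omega>\<bar>"
          by (rule abs_triangle_ineq4)
        have t2: "\<bar>cstar * S n \<omega> + cstar * X n \<omega> * act n \<omega>\<bar> \<le> \<bar>cstar * S n \<omega>\<bar> + \<bar>cstar * X n \<omega> * act n \<omega>\<bar>"
          by (rule abs_triangle_ineq)
        show ?thesis using t1 t2 a1 rX_abs[OF n w] cX_abs[OF n w] by linarith
      qed
      then show ?thesis using True n unfolding HH_def by simp
    next
      case False
      then show ?thesis using n unfolding HH_def by simp
    qed
  qed
  also have "\<dots> = cstar * (\<integral>\<omega>. \<bar>?g \<omega> * S n \<omega>\<bar> \<partial>M) + (cstar * C + (D - E)) * (\<integral>\<omega>. ?g \<omega> \<partial>M)"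
    using gi gSi by simp
  also have "(\<integral>\<omega>. \<bar>?g \<omega> * S n \<omega>\<bar> \<partial>M) = (\<integral>\<omega>. ?g \<omega> * S n \<omega> \<partial>M)"
  proof (rule integral_cong_AE)
    show "(\<lambda>\<omega>. \<bar>?g \<omega> * S n \<omega>\<bar>) \<in> borel_measurable M" using gSi by (rule borel_measurable_integrable)
    show "(\<lambda>\<omega>. ?g \<omega> * S n \<omega>) \<in> borel_measurable M" using F1(2)[OF n] by (rule borel_measurable_integrable)
    show "AE \<omega> in M. \<bar>?g \<omega> * S n \<omega>\<bar> = ?g \<omega> * S n \<omega>"
      using S_AE_nonneg[OF n] by eventually_elim (simp add: abs_mult)
  qed
  also have "\<dots> = (\<integral>\<omega>. ?g \<omega> \<partial>M) / lam" by (rule F1(1)[OF n])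
  also have "cstar * ((\<integral>\<omega>. ?g \<omega> \<partial>M) / lam) + (cstar * C + (D - E)) * (\<integral>\<omega>. ?g \<omega> \<partial>M) = KK * (\<integral>\<omega>. ?g \<omega> \<partial>M)"
    unfolding KK_def by (simp add: algebra_simps)
  also have "\<dots> \<le> KK * pq n" by (rule mult_left_mono[OF Pge_le[OF n] KK_nonneg])
  finally show ?thesis .
qed

lemma RR0: "\<omega> \<in> space M \<Longrightarrow> \<not> (1 \<le> n \<and> gE n \<omega>) \<Longrightarrow> RR n \<omega> = 0"
  unfolding RR_def by simp

lemma HHz: "\<omega> \<in> space M \<Longrightarrow> \<not> (1 \<le> n \<and> gE n \<omega>) \<Longrightarrow> HH n \<omega> = 0"
  unfolding HH_def by simp

lemmas RR_ser = series_tool[OF RR_integrable RR0 RR_normint]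
lemmas HH_ser = series_tool[OF HH_integrable HHz HH_normint]

lemma pointwise:
  assumes w: "\<omega> \<in> space M" and ex: "\<exists>n. 1 \<le> n \<and> psum lam r X S n \<omega> > T"
  shows "alg_reward lam r X S T \<omega> = (\<Sum>n. RR n \<omega>)" and "cstar * T - (\<Sum>n. RR n \<omega>) \<le> (\<Sum>n. HH n \<omega>)"
proof -
  let ?t = "alg_theta lam r X S T \<omega>"
  have iff: "\<And>n. (1 \<le> n \<and> gE n \<omega>) \<longleftrightarrow> n \<in> {1..?t}" by (rule theta_props(3)[OF ex])
  have sR: "(\<Sum>n. RR n \<omega>) = (\<Sum>n\<in>{1..?t}. RR n \<omega>)"
    by (rule suminf_finite) (use iff in \<open>auto simp: RR_def\<close>)
  have sH: "(\<Sum>n. HH n \<omega>) = (\<Sum>n\<in>{1..?t}. HH n \<omega>)"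
    by (rule suminf_finite) (use iff in \<open>auto simp: HH_def\<close>)
  have R: "(\<Sum>n\<in>{1..?t}. RR n \<omega>) = (\<Sum>n=1..?t. r (X n \<omega>) * act n \<omega>)"
    by (rule sum.cong[OF refl]) (use iff in \<open>auto simp: RR_def\<close>)
  have H: "(\<Sum>n\<in>{1..?t}. HH n \<omega>) = (\<Sum>n=1..?t. cstar * (S n \<omega> + X n \<omega> * act n \<omega>)) - (\<Sum>n=1..?t. r (X n \<omega>) * act n \<omega>)"
    unfolding sum_subtractf[symmetric]
    by (rule sum.cong[OF refl]) (use iff in \<open>auto simp: HH_def algebra_simps\<close>)
  have P: "(\<Sum>n=1..?t. cstar * (S n \<omega> + X n \<omega> * act n \<omega>)) = cstar * psum lam r X S ?t \<omega>"
    unfolding psum_def by (simp add: sum_distrib_left)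
  show "alg_reward lam r X S T \<omega> = (\<Sum>n. RR n \<omega>)"
    unfolding sR R alg_reward_def ..
  have "cstar * T \<le> cstar * psum lam r X S ?t \<omega>"
    using theta_props(2)[OF ex] cstar_nonneg by (intro mult_left_mono) auto
  then show "cstar * T - (\<Sum>n. RR n \<omega>) \<le> (\<Sum>n. HH n \<omega>)"
    unfolding sR sH R H P by simp
qed

definition bnd :: "nat \<Rightarrow> real" where
  "bnd n = (if n = 0 then 0 else lam * C * D / 2 * (pq n / sqrt (real n)))"

lemma bnd_sum: "summable bnd" "suminf bnd \<le> lam * C * D * sqrt (lam * T + 1)"
proof -
  have p0: "\<And>m. 0 \<le> pq (m + 1)" and p1: "\<And>m. pq (m + 1) \<le> 1" using pq_bounds by auto
  have s1: "1 \<le> lam * T + 1" using lam T by simp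
  note W = weighted_sum_bound[of "\<lambda>m. pq (m + 1)", OF p0 p1 pq_partial s1]
  have eq: "(\<lambda>m. bnd (Suc m)) = (\<lambda>m. lam * C * D / 2 * (pq (m + 1) / sqrt (real m + 1)))"
    by (simp add: bnd_def fun_eq_iff add.commute)
  have sS: "summable (\<lambda>m. bnd (Suc m))" unfolding eq by (rule summable_mult[OF W(1)])
  then show sb: "summable bnd" by (simp only: summable_Suc_iff)
  have "suminf bnd = (\<Sum>m. bnd (Suc m)) + bnd 0" using suminf_split_head[OF sb] by simp
  also have "\<dots> = lam * C * D / 2 * (\<Sum>m. pq (m + 1) / sqrt (real m + 1))"
  proof -
    have "(\<Sum>m. bnd (Suc m)) = (\<Sum>m. lam * C * D / 2 * (pq (m + 1) / sqrt (real m + 1)))" unfolding eq ..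
    also have "\<dots> = lam * C * D / 2 * (\<Sum>m. pq (m + 1) / sqrt (real m + 1))" by (rule suminf_mult[OF W(1)])
    finally show ?thesis by (simp add: bnd_def)
  qed
  also have "\<dots> \<le> lam * C * D / 2 * (2 * sqrt (lam * T + 1))"
    using W(2) lam C D by (intro mult_left_mono) auto
  also have "\<dots> = lam * C * D * sqrt (lam * T + 1)" by simp
  finally show "suminf bnd \<le> lam * C * D * sqrt (lam * T + 1)" .
qed

lemma HH_int_le: "(\<integral>\<omega>. HH n \<omega> \<partial>M) \<le> bnd n"
proof (cases "n = 0")
  case True then show ?thesis by (simp add: HH0 bnd_def)
next
  case False
  then have n: "1 \<le> n" by simp
  show ?thesis using HH_int(2)[OF n] gell_bound[OF n] False by (simp add: bnd_def)
qed

theorem main: "cstar * T - (\<integral>\<omega>. alg_reward lam r X S T \<omega> \<partial>M) \<le> lam * (D - E) * C * sqrt (pi / 2) * sqrt (lam * T + 1)"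
proof -
  have RRsm: "(\<lambda>\<omega>. \<Sum>n. RR n \<omega>) \<in> borel_measurable M" using RR_ser(1) by (rule borel_measurable_integrable)
  have AEeq: "AE \<omega> in M. alg_reward lam r X S T \<omega> = (\<Sum>n. RR n \<omega>)"
    using AE_good by (rule AE_mp) (intro AE_I2 impI pointwise(1))
  have AEle: "AE \<omega> in M. cstar * T - alg_reward lam r X S T \<omega> \<le> (\<Sum>n. HH n \<omega>)"
    using AE_good
  proof (rule AE_mp)
    show "AE \<omega> in M. (\<exists>n. 1 \<le> n \<and> psum lam r X S n \<omega> > T) \<longrightarrow> cstar * T - alg_reward lam r X S T \<omega> \<le> (\<Sum>n. HH n \<omega>)"
    proof (rule AE_I2, rule impI)
      fix \<omega> assume w: "\<omega> \<in> space M" and ex: "\<exists>n. 1 \<le> n \<and> psum lam r X S n \<omega> > T"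
      show "cstar * T - alg_reward lam r X S T \<omega> \<le> (\<Sum>n. HH n \<omega>)"
        using pointwise[OF w ex] by simp
    qed
  qed
  have rewi: "integrable M (alg_reward lam r X S T)"
    by (rule integrable_cong_AE_imp[OF RR_ser(1) reward_meas]) (use AEeq in \<open>auto elim: AE_mp\<close>)
  have "cstar * T - (\<integral>\<omega>. alg_reward lam r X S T \<omega> \<partial>M) = (\<integral>\<omega>. cstar * T - alg_reward lam r X S T \<omega> \<partial>M)"
    using rewi by (simp add: prob_space)
  also have "\<dots> \<le> (\<integral>\<omega>. (\<Sum>n. HH n \<omega>) \<partial>M)"
    by (rule integral_mono_AE[OF _ HH_ser(1) AEle]) (use rewi in simp)
  also have "\<dots> = (\<Sum>n. \<integral>\<omega>. HH n \<omega> \<partial>M)" by (rule HH_ser(2))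
  also have "\<dots> \<le> suminf bnd" by (rule suminf_le[OF HH_int_le HH_ser(3) bnd_sum(1)])
  also have "\<dots> \<le> lam * C * D * sqrt (lam * T + 1)" by (rule bnd_sum(2))
  also have "\<dots> \<le> lam * (D - E) * C * sqrt (pi / 2) * sqrt (lam * T + 1)"
  proof -
    have "1 \<le> sqrt (pi / 2)" using pi_gt3 by simp
    then have "D * 1 \<le> (D - E) * sqrt (pi / 2)" using D E by (intro mult_mono) auto
    then have "lam * C * sqrt (lam * T + 1) * D \<le> lam * C * sqrt (lam * T + 1) * ((D - E) * sqrt (pi / 2))"
      using lam C T by (intro mult_left_mono) auto
    then show ?thesis by (simp add: mult_ac)
  qed
  finally show ?thesis .
qed

end

theorem theorem3p2:
  fixes M :: "'a measure"
    and X S :: "nat \<Rightarrow> 'a \<Rightarrow> real"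
    and r :: "real \<Rightarrow> real"
    and C E D lam T :: real
  assumes "prob_space M"
    and "C > 0" and "E \<le> 0" and "0 \<le> D" and "lam > 0" and "T > 0"
    and "r \<in> borel_measurable borel"
    and "\<forall>x\<in>{0..C}. E \<le> r x \<and> r x \<le> D"
    and "\<forall>n\<ge>1. \<forall>\<omega>\<in>space M. 0 \<le> X n \<omega> \<and> X n \<omega> \<le> C"
    and "prob_space.indep_vars M (\<lambda>_. borel)
           (\<lambda>i. case i of Inl n \<Rightarrow> X n | Inr n \<Rightarrow> S n) (Inl ` {1..} \<union> Inr ` {1..})"
    and "\<forall>n\<ge>1. distr M borel (X n) = distr M borel (X 1)"
    and "\<forall>n\<ge>1. distributed M lborel (S n) (exponential_density lam)"
  shows "c_star M lam r (X 1) * T - (\<integral>\<omega>. alg_reward lam r X S T \<omega> \<partial>M)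
           \<le> lam * (D - E) * C * sqrt (pi / 2) * sqrt (lam * T + 1)"
proof -
  have st: "setting M X S r C E D lam T"
    unfolding setting_def setting_axioms_def using assms by (intro conjI) assumption+
  interpret setting M X S r C E D lam T by (rule st)
  show ?thesis using main unfolding cstar_def .
qed

end
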